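(* Let $K\subset\mathbb{R}^n$ be a nonempty compact set, let $\mathcal{F}=\{Q_1,\dots,Q_s\}$ be a finite family of $i$-dimensional linear subspaces of $\mathbb{R}^n$, where $1\le i\le n-1$, and let $\{H_m\}_{m\in\mathbb{N}}$ be a sequence of elements of $\mathcal{F}$. Then the sequence \[K_m:=M_{H_m}\cdots M_{H_1}K\] converges in the Hausdorff metric to a compact convex set $L$, which is also the Hausdorff limit of $M_{H_m}\cdots M_{H_1}\mathrm{conv}(K)$. Moreover, $L$ is symmetric with respect to every $Q_j\in\mathcal{F}$ appearing infinitely often in $\{H_m\}$ (i.e. $R_{Q_j}L=L$).
   Context: For a linear subspace $H$, $R_Hx=2(x|H)-x$ is the reflection with respect to $H$ ($x|H$ the orthogonal projection). The Minkowski symmetrization is $M_HC:=\frac12(C+R_HC)$, with $X+Y=\{x+y:x\in X,y\in Y\}$ and $tX=\{tx:x\in X\}$. $\mathrm{conv}$ denotes convex hull. *)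

theory Defs
  imports "HOL-Analysis.Analysis"
begin

definition orth_proj :: "'a::euclidean_space set \<Rightarrow> 'a \<Rightarrow> 'a" where
  "orth_proj H x = (THE y. y \<in> H \<and> (\<forall>h\<in>H. (x - y) \<bullet> h = 0))"

definition refl_sub :: "'a::euclidean_space set \<Rightarrow> 'a \<Rightarrow> 'a" where
  "refl_sub H x = 2 *\<^sub>R orth_proj H x - x"

definition msum :: "'a::real_vector set \<Rightarrow> 'a set \<Rightarrow> 'a set" where
  "msum X Y = {x + y | x y. x \<in> X \<and> y \<in> Y}"

definition minkowski_sym :: "'a::euclidean_space set \<Rightarrow> 'a set \<Rightarrow> 'a set" where
  "minkowski_sym H C = (\<lambda>z. (1/2::real) *\<^sub>R z) ` msum C (refl_sub H ` C)"

primrec sym_iter :: "(nat \<Rightarrow> 'a::euclidean_space set) \<Rightarrow> nat \<Rightarrow> 'a set \<Rightarrow> 'a set" where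
  "sym_iter H 0 C = C"
| "sym_iter H (Suc m) C = minkowski_sym (H m) (sym_iter H m C)"

text \<open>Hausdorff distance (meaningful for nonempty bounded sets).\<close>
definition hausdorff_dist :: "'a::metric_space set \<Rightarrow> 'a set \<Rightarrow> real" where
  "hausdorff_dist S T = max (SUP x\<in>S. setdist {x} T) (SUP y\<in>T. setdist {y} S)"

end

theory Submission
  imports Defs
begin

lemma orth_proj_ex:
  fixes Q :: "'a::euclidean_space set"
  assumes "subspace Q"
  shows "\<exists>!y. y \<in> Q \<and> (\<forall>h\<in>Q. (x - y) \<bullet> h = 0)"
proof -
  obtain y z where y: "y \<in> span Q" and z: "\<And>w. w \<in> span Q \<Longrightarrow> orthogonal z w" and xyz: "x = y + z"
    using orthogonal_subspace_decomp_exists[of Q x] by metis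
  have yQ: "y \<in> Q" using y assms by (metis span_eq_iff)
  have "\<forall>h\<in>Q. (x - y) \<bullet> h = 0" using z xyz by (auto simp: orthogonal_def span_base)
  moreover have "y' = y" if "y' \<in> Q" "\<forall>h\<in>Q. (x - y') \<bullet> h = 0" for y'
  proof -
    have d: "y - y' \<in> Q" using yQ that(1) assms by (simp add: subspace_diff)
    have "(x - y') \<bullet> (y - y') = 0" using that d by auto
    moreover have "(x - y) \<bullet> (y - y') = 0" using z xyz d by (auto simp: orthogonal_def span_base)
    ultimately have "(y - y') \<bullet> (y - y') = 0" by (simp add: inner_diff_left)
    thus ?thesis by simp
  qed
  ultimately show ?thesis using yQ by blast
qed

lemma orth_proj_in: "subspace Q \<Longrightarrow> orth_proj Q x \<in> Q"
  unfolding orth_proj_def using theI'[OF orth_proj_ex] by blast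

lemma orth_proj_orth: "subspace Q \<Longrightarrow> h \<in> Q \<Longrightarrow> (x - orth_proj Q x) \<bullet> h = 0"
  unfolding orth_proj_def using theI'[OF orth_proj_ex] by blast

lemma orth_proj_unique: "subspace Q \<Longrightarrow> y \<in> Q \<Longrightarrow> (\<forall>h\<in>Q. (x - y) \<bullet> h = 0) \<Longrightarrow> orth_proj Q x = y"
  unfolding orth_proj_def using the1_equality[OF orth_proj_ex] by blast

lemma orth_proj_linear: assumes Q: "subspace Q" shows "linear (orth_proj Q)"
proof
  fix x y
  have "\<forall>h\<in>Q. (x + y - (orth_proj Q x + orth_proj Q y)) \<bullet> h = 0"
  proof
    fix h assume h: "h \<in> Q"
    have "x + y - (orth_proj Q x + orth_proj Q y) = (x - orth_proj Q x) + (y - orth_proj Q y)" by simp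
    thus "(x + y - (orth_proj Q x + orth_proj Q y)) \<bullet> h = 0"
      using orth_proj_orth[OF Q h, of x] orth_proj_orth[OF Q h, of y] by (simp only: inner_add_left)
  qed
  then show "orth_proj Q (x + y) = orth_proj Q x + orth_proj Q y"
    by (intro orth_proj_unique[OF Q] subspace_add[OF Q orth_proj_in[OF Q] orth_proj_in[OF Q]])
next
  fix c::real and x
  have "\<forall>h\<in>Q. (c *\<^sub>R x - c *\<^sub>R orth_proj Q x) \<bullet> h = 0"
  proof
    fix h assume h: "h \<in> Q"
    have "c *\<^sub>R x - c *\<^sub>R orth_proj Q x = c *\<^sub>R (x - orth_proj Q x)" by (simp add: scaleR_diff_right)
    thus "(c *\<^sub>R x - c *\<^sub>R orth_proj Q x) \<bullet> h = 0"
      using orth_proj_orth[OF Q h, of x] by (simp only: inner_scaleR_left)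
  qed
  then show "orth_proj Q (c *\<^sub>R x) = c *\<^sub>R orth_proj Q x"
    by (intro orth_proj_unique[OF Q] subspace_scale[OF Q orth_proj_in[OF Q]])
qed

lemma orth_proj_sym: assumes Q: "subspace Q" shows "orth_proj Q x \<bullet> y = x \<bullet> orth_proj Q y"
proof -
  have 1: "(y - orth_proj Q y) \<bullet> orth_proj Q x = 0" by (rule orth_proj_orth[OF Q orth_proj_in[OF Q]])
  have 2: "(x - orth_proj Q x) \<bullet> orth_proj Q y = 0" by (rule orth_proj_orth[OF Q orth_proj_in[OF Q]])
  have "orth_proj Q x \<bullet> y = y \<bullet> orth_proj Q x" by (rule inner_commute)
  also have "\<dots> = orth_proj Q y \<bullet> orth_proj Q x" using 1 by (simp add: inner_diff_left)
  also have "\<dots> = orth_proj Q x \<bullet> orth_proj Q y" by (rule inner_commute)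
  also have "\<dots> = x \<bullet> orth_proj Q y" using 2 by (simp add: inner_diff_left)
  finally show ?thesis .
qed

lemma orth_proj_idem: "subspace Q \<Longrightarrow> orth_proj Q (orth_proj Q x) = orth_proj Q x"
  by (rule orth_proj_unique) (auto simp: orth_proj_in)

lemma refl_linear: assumes Q: "subspace Q" shows "linear (refl_sub Q)"
proof -
  have L: "linear (orth_proj Q)" by (rule orth_proj_linear[OF Q])
  show ?thesis
    by (rule linearI) (simp_all add: refl_sub_def linear_add[OF L] linear_scale[OF L] algebra_simps)
qed

lemma refl_sym: "subspace Q \<Longrightarrow> refl_sub Q x \<bullet> y = x \<bullet> refl_sub Q y"
  unfolding refl_sub_def by (simp add: inner_diff_left inner_diff_right orth_proj_sym)

lemma refl_invol[simp]: assumes Q: "subspace Q" shows "refl_sub Q (refl_sub Q x) = x"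
proof -
  have L: "linear (orth_proj Q)" by (rule orth_proj_linear[OF Q])
  show ?thesis unfolding refl_sub_def
    by (simp add: linear_diff[OF L] linear_scale[OF L] orth_proj_idem[OF Q] algebra_simps flip: scaleR_add_left)
qed

lemma refl_norm[simp]: "subspace Q \<Longrightarrow> norm (refl_sub Q x) = norm x"
proof -
  assume Q: "subspace Q"
  have "refl_sub Q x \<bullet> refl_sub Q x = x \<bullet> x" using refl_sym[OF Q, of x "refl_sub Q x"] Q by simp
  thus ?thesis by (simp add: norm_eq_sqrt_inner)
qed

lemma refl_dist[simp]: "subspace Q \<Longrightarrow> dist (refl_sub Q x) (refl_sub Q y) = dist x y"
  using refl_linear[of Q] by (simp add: dist_norm flip: linear_diff)

section \<open>Hausdorff distance\<close>

lemma setdist_bdd: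
  fixes S T :: "'a::euclidean_space set"
  assumes "bounded S" "bounded T" "T \<noteq> {}"
  shows "bdd_above ((\<lambda>x. setdist {x} T) ` S)"
proof -
  obtain t where t: "t \<in> T" using assms by auto
  obtain B where B: "\<And>x. x \<in> S \<Longrightarrow> norm x \<le> B" using assms(1) bounded_iff by metis
  have "setdist {x} T \<le> B + norm t" if "x \<in> S" for x
  proof -
    have "setdist {x} T \<le> dist x t" using t by (simp add: setdist_le_dist)
    also have "\<dots> \<le> norm x + norm t" by (simp add: dist_norm norm_triangle_ineq4)
    finally show ?thesis using B[OF that] by simp
  qed
  thus ?thesis by (intro bdd_aboveI[where M="B + norm t"]) auto
qed

lemma hd_le_iff:
  fixes S T :: "'a::euclidean_space set"
  assumes "bounded S" "bounded T" "S \<noteq> {}" "T \<noteq> {}"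
  shows "hausdorff_dist S T \<le> e \<longleftrightarrow> (\<forall>x\<in>S. setdist {x} T \<le> e) \<and> (\<forall>y\<in>T. setdist {y} S \<le> e)"
  unfolding hausdorff_dist_def
  using cSUP_le_iff[OF assms(3) setdist_bdd[OF assms(1,2,4)]]
    cSUP_le_iff[OF assms(4) setdist_bdd[OF assms(2,1,3)]]
  by simp

lemma hd_ge1:
  fixes S T :: "'a::euclidean_space set"
  assumes "bounded S" "bounded T" "T \<noteq> {}" "x \<in> S"
  shows "setdist {x} T \<le> hausdorff_dist S T"
  unfolding hausdorff_dist_def
  using cSUP_upper[OF assms(4) setdist_bdd[OF assms(1,2,3)]] by simp

lemma hd_ge2:
  fixes S T :: "'a::euclidean_space set"
  assumes "bounded S" "bounded T" "S \<noteq> {}" "y \<in> T"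
  shows "setdist {y} S \<le> hausdorff_dist S T"
  unfolding hausdorff_dist_def
  using cSUP_upper[OF assms(4) setdist_bdd[OF assms(2,1,3)]] by simp

lemma hd_sym: "hausdorff_dist S T = hausdorff_dist T S"
  unfolding hausdorff_dist_def by simp

lemma hd_nonneg:
  fixes S T :: "'a::euclidean_space set"
  assumes "bounded S" "bounded T" "S \<noteq> {}" "T \<noteq> {}"
  shows "0 \<le> hausdorff_dist S T"
proof -
  obtain x where "x \<in> S" using assms by auto
  thus ?thesis using hd_ge1[OF assms(1,2,4)] setdist_pos_le by (meson order_trans)
qed

lemma hd_refl:
  fixes S :: "'a::euclidean_space set"
  assumes "bounded S" "S \<noteq> {}"
  shows "hausdorff_dist S S = 0"
proof -
  have "hausdorff_dist S S \<le> 0" using hd_le_iff[OF assms(1,1,2,2)]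
    by (simp add: setdist_eq_0I)
  thus ?thesis using hd_nonneg[OF assms(1,1,2,2)] by simp
qed

lemma hd_triangle:
  fixes S T U :: "'a::euclidean_space set"
  assumes "bounded S" "bounded T" "bounded U" "S \<noteq> {}" "T \<noteq> {}" "U \<noteq> {}"
  shows "hausdorff_dist S U \<le> hausdorff_dist S T + hausdorff_dist T U"
proof -
  have key: "setdist {x} C \<le> hausdorff_dist A B + hausdorff_dist B C"
    if "bounded A" "bounded B" "bounded C" "B \<noteq> {}" "C \<noteq> {}" "x \<in> A" for A B C and x :: 'a
  proof -
    have "setdist {x} C - hausdorff_dist B C \<le> setdist {x} B"
    proof (rule le_setdistI)
      fix a b assume "a \<in> {x}" "b \<in> B"
      then have "setdist {x} C \<le> setdist {x} {b} + setdist {b} C" using setdist_triangle by blast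
      also have "\<dots> \<le> dist a b + hausdorff_dist B C" using hd_ge1[OF that(2,3,5) \<open>b \<in> B\<close>] \<open>a \<in> {x}\<close> by simp
      finally show "setdist {x} C - hausdorff_dist B C \<le> dist a b" by simp
    qed (use that in auto)
    thus ?thesis using hd_ge1[OF that(1,2,4,6)] by simp
  qed
  show ?thesis
    apply (subst hd_le_iff[OF assms(1,3,4,6)])
    using key[OF assms(1,2,3,5,6)] key[OF assms(3,2,1,5,4)] hd_sym[of S T] hd_sym[of T U]
    by (simp add: add.commute)
qed

lemma hd_zero:
  fixes S T :: "'a::euclidean_space set"
  assumes "compact S" "compact T" "S \<noteq> {}" "T \<noteq> {}" "hausdorff_dist S T = 0"
  shows "S = T"
proof -
  have b: "bounded S" "bounded T" using assms compact_imp_bounded by auto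
  have "\<forall>x\<in>S. setdist {x} T \<le> 0" "\<forall>y\<in>T. setdist {y} S \<le> 0" using hd_le_iff[OF b assms(3,4), of 0] assms(5) by auto
  hence "\<forall>x\<in>S. setdist {x} T = 0" "\<forall>y\<in>T. setdist {y} S = 0" by (auto intro: antisym)
  thus ?thesis using assms compact_imp_closed setdist_eq_0_closed by blast
qed

lemma hd_near:
  fixes S T :: "'a::euclidean_space set"
  assumes "bounded S" "compact T" "T \<noteq> {}" "x \<in> S"
  shows "\<exists>t\<in>T. dist x t \<le> hausdorff_dist S T"
proof -
  have "setdist {x} T = dist x (closest_point T x)"
    using assms by (simp add: setdist_closest_point compact_imp_closed)
  moreover have "closest_point T x \<in> T" using assms by (simp add: closest_point_in_set compact_imp_closed)
  ultimately show ?thesis using hd_ge1[OF assms(1) compact_imp_bounded[OF assms(2)] assms(3,4)] by metis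
qed

lemma hd_near2:
  fixes S T :: "'a::euclidean_space set"
  assumes "compact S" "bounded T" "S \<noteq> {}" "y \<in> T"
  shows "\<exists>s\<in>S. dist y s \<le> hausdorff_dist S T"
  using hd_near[OF assms(2,1,3,4)] hd_sym by metis

section \<open>Minkowski symmetrization\<close>

lemma msym_image:
  "minkowski_sym Q C = (\<lambda>p. (1/2::real) *\<^sub>R (fst p + refl_sub Q (snd p))) ` (C \<times> C)"
  unfolding minkowski_sym_def msum_def by force

lemma msym_iff:
  "x \<in> minkowski_sym Q C \<longleftrightarrow> (\<exists>a\<in>C. \<exists>b\<in>C. x = (1/2::real) *\<^sub>R (a + refl_sub Q b))"
  unfolding msym_image by force

lemma msym_lin:
  assumes "subspace Q"
  shows "linear (\<lambda>p::'a::euclidean_space \<times> 'a. (1/2::real) *\<^sub>R (fst p + refl_sub Q (snd p)))"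
  using refl_linear[OF assms]
  by (intro linearI) (auto simp: linear_add linear_scale algebra_simps)

lemma msym_compact:
  fixes C :: "'a::euclidean_space set"
  assumes "subspace Q" "compact C"
  shows "compact (minkowski_sym Q C)"
  unfolding msym_image
  by (intro compact_continuous_image linear_continuous_on compact_Times assms
      linear_conv_bounded_linear[THEN iffD1] msym_lin)

lemma msym_convex:
  fixes C :: "'a::euclidean_space set"
  assumes "subspace Q" "convex C"
  shows "convex (minkowski_sym Q C)"
  unfolding msym_image
  by (intro convex_linear_image convex_Times assms msym_lin)

lemma msym_nonempty: "C \<noteq> {} \<Longrightarrow> minkowski_sym Q C \<noteq> {}"
  unfolding msym_image by auto

lemma msym_mono: "A \<subseteq> B \<Longrightarrow> minkowski_sym Q A \<subseteq> minkowski_sym Q B"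
  unfolding msym_image by auto

lemma msym_cball:
  fixes C :: "'a::euclidean_space set"
  assumes "subspace Q" "C \<subseteq> cball 0 R"
  shows "minkowski_sym Q C \<subseteq> cball 0 R"
proof
  fix x assume "x \<in> minkowski_sym Q C"
  then obtain a b where ab: "a \<in> C" "b \<in> C" "x = (1/2::real) *\<^sub>R (a + refl_sub Q b)" by (auto simp: msym_iff)
  have "norm x \<le> (1/2) * (norm a + norm (refl_sub Q b))"
    using ab(3) norm_triangle_ineq[of a "refl_sub Q b"] by simp
  also have "\<dots> \<le> R"
  proof -
    have "norm a \<le> R" "norm b \<le> R" using ab(1,2) assms(2) by auto
    thus ?thesis using assms(1) by simp
  qed
  finally show "x \<in> cball 0 R" by simp
qed

lemma msym_fix:
  fixes C :: "'a::euclidean_space set"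
  assumes Q: "subspace Q" and "convex C" and sym: "refl_sub Q ` C = C"
  shows "minkowski_sym Q C = C"
proof
  show "minkowski_sym Q C \<subseteq> C"
  proof
    fix x assume "x \<in> minkowski_sym Q C"
    then obtain a b where ab: "a \<in> C" "b \<in> C" "x = (1/2::real) *\<^sub>R (a + refl_sub Q b)" by (auto simp: msym_iff)
    have "refl_sub Q b \<in> C" using sym ab by blast
    then have "(1/2::real) *\<^sub>R a + (1/2::real) *\<^sub>R refl_sub Q b \<in> C"
      using \<open>convex C\<close> ab(1) by (intro convexD) auto
    thus "x \<in> C" using ab(3) by (simp add: scaleR_add_right)
  qed
next
  show "C \<subseteq> minkowski_sym Q C"
  proof
    fix x assume x: "x \<in> C"
    have "refl_sub Q x \<in> C" using sym x by blast
    moreover have "x = (1/2::real) *\<^sub>R (x + refl_sub Q (refl_sub Q x))" using Q by (simp add: scaleR_2 flip: scaleR_add_left)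
    ultimately show "x \<in> minkowski_sym Q C" using x by (auto simp: msym_iff)
  qed
qed

lemma msym_nonexp:
  fixes A B :: "'a::euclidean_space set"
  assumes Q: "subspace Q" and A: "compact A" "A \<noteq> {}" and B: "compact B" "B \<noteq> {}"
  shows "hausdorff_dist (minkowski_sym Q A) (minkowski_sym Q B) \<le> hausdorff_dist A B"
proof -
  have bA: "bounded A" "bounded B" using A B compact_imp_bounded by auto
  have one: "setdist {x} (minkowski_sym Q D) \<le> hausdorff_dist C D"
    if C: "compact C" "C \<noteq> {}" and D: "compact D" "D \<noteq> {}" and x: "x \<in> minkowski_sym Q C" for C D x
  proof -
    obtain a b where ab: "a \<in> C" "b \<in> C" "x = (1/2::real) *\<^sub>R (a + refl_sub Q b)" using x by (auto simp: msym_iff)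
    obtain a' where a': "a' \<in> D" "dist a a' \<le> hausdorff_dist C D"
      using hd_near[OF compact_imp_bounded[OF C(1)] D ab(1)] by blast
    obtain b' where b': "b' \<in> D" "dist b b' \<le> hausdorff_dist C D"
      using hd_near[OF compact_imp_bounded[OF C(1)] D ab(2)] by blast
    let ?x' = "(1/2::real) *\<^sub>R (a' + refl_sub Q b')"
    have "?x' \<in> minkowski_sym Q D" using a' b' by (auto simp: msym_iff)
    hence "setdist {x} (minkowski_sym Q D) \<le> dist x ?x'" by (simp add: setdist_le_dist)
    also have "dist x ?x' = (1/2) * norm ((a - a') + (refl_sub Q b - refl_sub Q b'))"
    proof -
      have "x - ?x' = (1/2::real) *\<^sub>R ((a - a') + (refl_sub Q b - refl_sub Q b'))"
        using ab(3) by (simp add: algebra_simps)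
      thus ?thesis by (simp add: dist_norm)
    qed
    also have "\<dots> \<le> (1/2) * (dist a a' + dist b b')"
      using norm_triangle_ineq[of "a - a'" "refl_sub Q b - refl_sub Q b'"] refl_dist[OF Q, of b b']
      by (simp add: dist_norm)
    also have "\<dots> \<le> hausdorff_dist C D" using a' b' by simp
    finally show ?thesis .
  qed
  have c: "compact (minkowski_sym Q A)" "compact (minkowski_sym Q B)" using msym_compact[OF Q] A B by auto
  have n: "minkowski_sym Q A \<noteq> {}" "minkowski_sym Q B \<noteq> {}" using msym_nonempty A B by auto
  show ?thesis
    apply (subst hd_le_iff[OF compact_imp_bounded[OF c(1)] compact_imp_bounded[OF c(2)] n])
    using one[OF A B] one[OF B A] hd_sym[of A B] by auto
qed

lemma hd_cauchy_conv:
  fixes B :: "nat \<Rightarrow> 'a::euclidean_space set"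
  assumes B: "\<And>k. compact (B k)" "\<And>k. B k \<noteq> {}" "\<And>k. B k \<subseteq> cball 0 R"
  and cauchy: "\<And>e. e > 0 \<Longrightarrow> \<exists>N. \<forall>n\<ge>N. \<forall>m\<ge>N. hausdorff_dist (B n) (B m) < e"
  shows "\<exists>L. compact L \<and> L \<noteq> {} \<and> L \<subseteq> cball 0 R \<and> (\<lambda>k. hausdorff_dist (B k) L) \<longlonglongrightarrow> 0"
proof -
  define L where "L = (\<Inter>N. closure (\<Union>k\<in>{N..}. B k))"
  have bB: "\<And>k. bounded (B k)" using B(1) by (simp add: compact_imp_bounded)
  have LR: "L \<subseteq> cball 0 R"
  proof -
    have "(\<Union>k\<in>{0..}. B k) \<subseteq> cball 0 R" using B by auto
    hence "closure (\<Union>k\<in>{0..}. B k) \<subseteq> cball 0 R" by (simp add: closure_minimal)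
    thus ?thesis unfolding L_def by blast
  qed
  have cL: "compact L"
    unfolding compact_eq_bounded_closed L_def
    using LR[unfolded L_def] bounded_cball bounded_subset by (auto intro: closed_INT)
  have ii: "\<exists>x\<in>L. dist a x \<le> e" if N: "\<forall>n\<ge>N. \<forall>m\<ge>N. hausdorff_dist (B n) (B m) < e"
    and k: "k \<ge> N" and a: "a \<in> B k" for N k a e
  proof -
    have "\<forall>j. \<exists>b. b \<in> B (N + j) \<and> dist a b \<le> hausdorff_dist (B k) (B (N + j))"
      using hd_near[OF bB B(1,2) a] by blast
    then obtain b where b: "\<And>j. b j \<in> B (N + j)" "\<And>j. dist a (b j) \<le> hausdorff_dist (B k) (B (N + j))"
      by metis
    have bR: "\<forall>j. b j \<in> cball 0 R" using b(1) B(3) by blast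
    obtain l r where l: "l \<in> cball 0 R" "strict_mono r" "(b \<circ> r) \<longlonglongrightarrow> l"
      using seq_compactE[OF compact_imp_seq_compact[OF compact_cball] bR] by metis
    have "dist a (b j) \<le> e" for j
    proof -
      have "hausdorff_dist (B k) (B (N + j)) < e" using N k by simp
      thus ?thesis using b(2)[of j] by linarith
    qed
    hence "\<And>n. (b \<circ> r) n \<in> cball a e" by (simp add: mem_cball)
    hence "l \<in> cball a e" using closed_sequentially[OF closed_cball _ l(3)] by blast
    moreover have "l \<in> L" unfolding L_def
    proof
      fix M assume "M \<in> (UNIV::nat set)"
      have lim: "(\<lambda>j. (b \<circ> r) (j + M)) \<longlonglongrightarrow> l" using l(3) by (rule LIMSEQ_ignore_initial_segment)
      have A: "(\<lambda>j. (b \<circ> r) (j + M)) j \<in> (\<Union>k\<in>{M..}. B k)" for j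
      proof -
        have "r (j + M) \<ge> j + M" using seq_suble[OF l(2)] by simp
        hence "N + r (j + M) \<in> {M..}" by simp
        thus ?thesis using b(1)[of "r (j + M)"] by (simp only: o_apply UN_iff) (rule bexI)
      qed
      have "(\<forall>n. (\<lambda>j. (b \<circ> r) (j + M)) n \<in> (\<Union>k\<in>{M..}. B k)) \<and> (\<lambda>j. (b \<circ> r) (j + M)) \<longlonglongrightarrow> l"
        using A lim by (intro conjI allI)
      thus "l \<in> closure (\<Union>k\<in>{M..}. B k)" unfolding closure_sequential by (rule exI[where x="\<lambda>j. (b \<circ> r) (j + M)"])
    qed
    ultimately show ?thesis by auto
  qed
  have i: "setdist {x} (B k) \<le> 2 * e" if N: "\<forall>n\<ge>N. \<forall>m\<ge>N. hausdorff_dist (B n) (B m) < e"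
    and k: "k \<ge> N" and x: "x \<in> L" and e: "e > 0" for N k x e
  proof -
    have "x \<in> closure (\<Union>k\<in>{N..}. B k)" using x unfolding L_def by blast
    hence "\<exists>y\<in>(\<Union>k\<in>{N..}. B k). dist y x < e" using e unfolding closure_approachable by blast
    then obtain y where y: "y \<in> (\<Union>k\<in>{N..}. B k)" "dist y x < e" by blast
    then obtain j where j: "j \<ge> N" "y \<in> B j" by auto
    have "setdist {y} (B k) \<le> hausdorff_dist (B j) (B k)" using hd_ge1[OF bB bB B(2) j(2)] .
    also have "\<dots> < e" using N j k by auto
    finally have "setdist {y} (B k) < e" .
    moreover have "setdist {x} (B k) \<le> dist x y + setdist {y} (B k)"
      using setdist_Lipschitz[of x "B k" y] by simp
    ultimately show ?thesis using y(2) by (simp add: dist_commute)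
  qed
  obtain N0 where N0: "\<forall>n\<ge>N0. \<forall>m\<ge>N0. hausdorff_dist (B n) (B m) < 1" using cauchy[of 1] by auto
  obtain a0 where "a0 \<in> B N0" using B(2) by blast
  hence neL: "L \<noteq> {}" using ii[OF N0 order_refl] by auto
  have "(\<lambda>k. hausdorff_dist (B k) L) \<longlonglongrightarrow> 0"
  proof (rule LIMSEQ_I)
    fix r :: real assume r: "r > 0"
    obtain N where N: "\<forall>n\<ge>N. \<forall>m\<ge>N. hausdorff_dist (B n) (B m) < r/3" using cauchy[of "r/3"] r by auto
    have "norm (hausdorff_dist (B k) L) < r" if k: "k \<ge> N" for k
    proof -
      have "hausdorff_dist (B k) L \<le> 2 * (r/3)"
      proof (subst hd_le_iff[OF bB compact_imp_bounded[OF cL] B(2) neL], intro conjI ballI)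
        fix a assume a: "a \<in> B k"
        obtain x where x: "x \<in> L" "dist a x \<le> r/3" using ii[OF N k a] by blast
        have "setdist {a} L \<le> dist a x" using x(1) by (simp add: setdist_le_dist)
        thus "setdist {a} L \<le> 2 * (r/3)" using x(2) r by simp
      next
        fix x assume "x \<in> L"
        thus "setdist {x} (B k) \<le> 2 * (r/3)" using i[OF N k] r by simp
      qed
      moreover have "0 \<le> hausdorff_dist (B k) L" using hd_nonneg[OF bB compact_imp_bounded[OF cL] B(2) neL] .
      ultimately show ?thesis using r by simp
    qed
    thus "\<exists>no. \<forall>n\<ge>no. norm (hausdorff_dist (B n) L - 0) < r" by auto
  qed
  thus ?thesis using cL neL LR by blast
qed

definition hyp :: "real \<Rightarrow> 'a::euclidean_space set set" where
  "hyp R = {S. compact S \<and> S \<noteq> {} \<and> S \<subseteq> cball 0 R}"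

lemma hyp_metric: "Metric_space (hyp R) (\<lambda>S T. \<bar>hausdorff_dist S T\<bar>)"
proof
  fix S T show "\<bar>hausdorff_dist S T\<bar> = \<bar>hausdorff_dist T S\<bar>" by (simp add: hd_sym)
next
  fix S T :: "'a set" assume "S \<in> hyp R" "T \<in> hyp R"
  thus "(\<bar>hausdorff_dist S T\<bar> = 0) = (S = T)"
    using hd_zero hd_refl compact_imp_bounded unfolding hyp_def by auto
next
  fix S T U :: "'a set" assume "S \<in> hyp R" "T \<in> hyp R" "U \<in> hyp R"
  thus "\<bar>hausdorff_dist S U\<bar> \<le> \<bar>hausdorff_dist S T\<bar> + \<bar>hausdorff_dist T U\<bar>"
    using hd_triangle[of S T U] hd_nonneg compact_imp_bounded unfolding hyp_def
    by (smt (verit, ccfv_SIG) mem_Collect_eq)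
qed simp

lemma hyp_totally_bounded: "Metric_space.mtotally_bounded (hyp R :: 'a::euclidean_space set set) (\<lambda>S T. \<bar>hausdorff_dist S T\<bar>) (hyp R)"
proof -
  interpret Metric_space "hyp R :: 'a set set" "\<lambda>S T. \<bar>hausdorff_dist S T\<bar>" by (rule hyp_metric)
  show ?thesis unfolding mtotally_bounded_def
  proof (intro allI impI)
    fix \<epsilon> :: real assume e: "\<epsilon> > 0"
    obtain P where P: "finite P" "P \<subseteq> cball (0::'a) R" "cball 0 R \<subseteq> (\<Union>x\<in>P. ball x (\<epsilon>/2))"
      using seq_compact_imp_totally_bounded[OF compact_imp_seq_compact[OF compact_cball], of 0 R, rule_format, of "\<epsilon>/2"] e
      by auto
    define K where "K = {S. S \<subseteq> P \<and> S \<noteq> {}}"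
    have fK: "finite K" unfolding K_def using P(1) by auto
    have KM: "K \<subseteq> hyp R" unfolding K_def hyp_def using P(1,2) finite_subset finite_imp_compact by blast
    have cover: "A \<in> (\<Union>x\<in>K. mball x \<epsilon>)" if A: "A \<in> hyp R" for A
    proof -
      have cA: "compact A" "A \<noteq> {}" "A \<subseteq> cball 0 R" using A unfolding hyp_def by auto
      define S where "S = {p\<in>P. setdist {p} A < \<epsilon>/2}"
      have near: "\<exists>p\<in>S. dist a p < \<epsilon>/2" if a: "a \<in> A" for a
      proof -
        obtain p where p: "p \<in> P" "a \<in> ball p (\<epsilon>/2)" using P(3) cA(3) a by blast
        have "setdist {p} A \<le> dist p a" using a by (simp add: setdist_le_dist)
        hence "p \<in> S" using p by (simp add: S_def)
        thus ?thesis using p(2) by (auto simp: dist_commute)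
      qed
      have SK: "S \<in> K" unfolding K_def S_def using near cA(2) by (auto simp: S_def)
      have bS: "bounded S" "S \<noteq> {}" using SK unfolding K_def using P(1) finite_imp_bounded finite_subset by auto
      have "hausdorff_dist S A \<le> \<epsilon>/2"
      proof (subst hd_le_iff[OF bS(1) compact_imp_bounded[OF cA(1)] bS(2) cA(2)], intro conjI ballI)
        fix p assume "p \<in> S" thus "setdist {p} A \<le> \<epsilon>/2" by (simp add: S_def)
      next
        fix a assume "a \<in> A"
        then obtain p where "p \<in> S" "dist a p < \<epsilon>/2" using near by blast
        thus "setdist {a} S \<le> \<epsilon>/2" using setdist_le_dist[of a "{a}" p S] by simp
      qed
      moreover have "0 \<le> hausdorff_dist S A" using hd_nonneg[OF bS(1) compact_imp_bounded[OF cA(1)] bS(2) cA(2)] .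
      ultimately have "\<bar>hausdorff_dist S A\<bar> < \<epsilon>" using e by simp
      thus ?thesis using SK KM A unfolding mball_def by blast
    qed
    have cov: "hyp R \<subseteq> (\<Union>x\<in>K. mball x \<epsilon>)" using cover by (rule subsetI)
    show "\<exists>K. finite K \<and> K \<subseteq> hyp R \<and> hyp R \<subseteq> (\<Union>x\<in>K. mball x \<epsilon>)"
      using fK KM cov by blast
  qed
qed

lemma blaschke:
  fixes A :: "nat \<Rightarrow> 'a::euclidean_space set"
  assumes A: "\<And>k. compact (A k)" "\<And>k. A k \<noteq> {}" "\<And>k. A k \<subseteq> cball 0 R"
  shows "\<exists>L r. strict_mono r \<and> compact L \<and> L \<noteq> {} \<and> L \<subseteq> cball 0 R \<and>
     (\<lambda>k. hausdorff_dist (A (r k)) L) \<longlonglongrightarrow> 0"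
proof -
  interpret Metric_space "hyp R :: 'a set set" "\<lambda>S T. \<bar>hausdorff_dist S T\<bar>" by (rule hyp_metric)
  have rA: "range A \<subseteq> hyp R" using A unfolding hyp_def by auto
  have "\<exists>r. strict_mono r \<and> MCauchy (A \<circ> r)"
  proof -
    have tb: "mtotally_bounded (hyp R)" by (rule hyp_totally_bounded)
    show ?thesis using mtotally_bounded_sequentially[THEN iffD1, OF tb, THEN conjunct2, rule_format, OF rA] .
  qed
  then obtain r where r: "strict_mono r" "MCauchy (A \<circ> r)" by blast
  have cau: "\<exists>N. \<forall>n\<ge>N. \<forall>m\<ge>N. hausdorff_dist (A (r n)) (A (r m)) < e" if e: "e > 0" for e
  proof -
    obtain N where N: "\<forall>n n'. N \<le> n \<longrightarrow> N \<le> n' \<longrightarrow> \<bar>hausdorff_dist ((A \<circ> r) n) ((A \<circ> r) n')\<bar> < e"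
      using r(2)[unfolded MCauchy_def, THEN conjunct2, rule_format, OF e] by blast
    show ?thesis
    proof (intro exI allI impI)
      fix n m assume "N \<le> n" "N \<le> m"
      thus "hausdorff_dist (A (r n)) (A (r m)) < e" using N by force
    qed
  qed
  have "\<exists>L. compact L \<and> L \<noteq> {} \<and> L \<subseteq> cball 0 R \<and> (\<lambda>k. hausdorff_dist (A (r k)) L) \<longlonglongrightarrow> 0"
    by (rule hd_cauchy_conv[of "\<lambda>k. A (r k)" R]) (rule A, rule A, rule A, rule cau)
  then obtain L where L: "compact L" "L \<noteq> {}" "L \<subseteq> cball 0 R" "(\<lambda>k. hausdorff_dist (A (r k)) L) \<longlonglongrightarrow> 0"
    by blast
  show ?thesis by (intro exI[of _ L] exI[of _ r] conjI r(1) L)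
qed

section \<open>An explicit coordinate isometry\<close>

typedef (overloaded) ('a::euclidean_space) bidx = "Basis :: 'a set"
  using nonempty_Basis by blast

lemma finite_bidx: "finite (UNIV :: 'a::euclidean_space bidx set)"
proof -
  have "UNIV = Abs_bidx ` (Basis :: 'a set)" using type_definition.Abs_image[OF type_definition_bidx] by (rule sym)
  thus ?thesis by (metis finite_Basis finite_imageI)
qed

instance bidx :: (euclidean_space) finite
  by standard (rule finite_bidx)

definition bidx_enc :: "'a::euclidean_space bidx \<Rightarrow> nat" where
  "bidx_enc = (SOME f. inj f)"

lemma inj_bidx_enc: "inj bidx_enc"
proof -
  obtain f :: "'a bidx \<Rightarrow> nat" and n where "f ` UNIV = {i. i < n} \<and> inj_on f UNIV"
    using finite_imp_inj_to_nat_seg[OF finite_bidx] by metis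
  hence "\<exists>f :: 'a bidx \<Rightarrow> nat. inj f" by blast
  thus ?thesis unfolding bidx_enc_def by (rule someI_ex)
qed

instantiation bidx :: (euclidean_space) linorder
begin
definition less_eq_bidx :: "'a bidx \<Rightarrow> 'a bidx \<Rightarrow> bool" where
  "less_eq_bidx x y \<longleftrightarrow> bidx_enc x \<le> bidx_enc y"
definition less_bidx :: "'a bidx \<Rightarrow> 'a bidx \<Rightarrow> bool" where
  "less_bidx x y \<longleftrightarrow> bidx_enc x < bidx_enc y"
instance by standard (auto simp: less_eq_bidx_def less_bidx_def inj_eq[OF inj_bidx_enc])
end

instance bidx :: (euclidean_space) wellorder
proof
  fix P :: "'a bidx \<Rightarrow> bool" and a
  assume H: "\<And>x. (\<And>y. y < x \<Longrightarrow> P y) \<Longrightarrow> P x"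
  show "P a"
    by (induct a rule: measure_induct_rule[of bidx_enc]) (rule H, simp add: less_bidx_def)
qed

definition bT :: "real^('a::euclidean_space bidx) \<Rightarrow> 'a" where
  "bT v = (\<Sum>i\<in>UNIV. (v$i) *\<^sub>R Rep_bidx i)"

definition bS :: "'a::euclidean_space \<Rightarrow> real^('a bidx)" where
  "bS x = (\<chi> i. x \<bullet> Rep_bidx i)"

lemma Rep_bidx_Basis: "Rep_bidx i \<in> Basis"
  using Rep_bidx by blast

lemma inner_Rep: "Rep_bidx i \<bullet> Rep_bidx j = (if i = j then 1 else 0)"
  using inner_Basis[OF Rep_bidx_Basis Rep_bidx_Basis, of i j] Rep_bidx_inject[of i j] by simp

lemma bT_inner_Rep: "bT v \<bullet> Rep_bidx j = v$j"
proof -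
  have "bT v \<bullet> Rep_bidx j = (\<Sum>i\<in>UNIV. v$i * (if i = j then 1 else 0))"
    unfolding bT_def by (simp add: inner_sum_left inner_Rep)
  also have "\<dots> = (\<Sum>i\<in>UNIV. (if i = j then v$i else 0))" by (rule sum.cong) auto
  also have "\<dots> = v$j" by simp
  finally show ?thesis .
qed

lemma bS_bT[simp]: "bS (bT v) = v"
  by (simp add: bS_def bT_inner_Rep vec_eq_iff)

lemma bT_bS[simp]: "bT (bS x) = x"
proof -
  have "bT (bS x) = (\<Sum>i\<in>UNIV. (x \<bullet> Rep_bidx i) *\<^sub>R Rep_bidx i)" by (simp add: bT_def bS_def)
  also have "\<dots> = (\<Sum>b\<in>Basis. (x \<bullet> b) *\<^sub>R b)"
  proof (rule sum.reindex_bij_betw)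
    show "bij_betw Rep_bidx UNIV Basis"
      unfolding bij_betw_def using Rep_bidx_inject type_definition.Rep_range[OF type_definition_bidx]
      by (auto simp: inj_on_def)
  qed
  also have "\<dots> = x" by (rule euclidean_representation)
  finally show ?thesis .
qed

lemma bT_linear: "linear bT"
  by (rule linearI) (simp_all add: bT_def scaleR_add_left sum.distrib scaleR_sum_right)

lemma bS_linear: "linear bS"
  by (rule linearI) (simp_all add: bS_def vec_eq_iff inner_add_left)

lemma bT_inner: "bT v \<bullet> bT w = v \<bullet> w"
proof -
  have "bT v \<bullet> bT w = (\<Sum>i\<in>UNIV. v$i * (Rep_bidx i \<bullet> bT w))"
    unfolding bT_def[of v] by (simp add: inner_sum_left)
  also have "\<dots> = (\<Sum>i\<in>UNIV. v$i * w$i)" by (simp add: inner_commute[of _ "bT w"] bT_inner_Rep)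
  also have "\<dots> = v \<bullet> w" by (simp add: inner_vec_def)
  finally show ?thesis .
qed

lemma norm_bT[simp]: "norm (bT v) = norm v"
  by (simp add: norm_eq_sqrt_inner bT_inner)

lemma cont_abs_int:
  fixes f :: "'a::euclidean_space \<Rightarrow> 'b::euclidean_space"
  assumes "continuous_on UNIV f"
  shows "f absolutely_integrable_on cball 0 r"
proof -
  obtain a where a: "cball (0::'a) r \<subseteq> cbox (-a) a" using bounded_subset_cbox_symmetric[of "cball (0::'a) r"] by auto
  have "f absolutely_integrable_on cbox (-a) a"
    using assms by (intro absolutely_integrable_continuous continuous_on_subset[OF assms]) auto
  moreover have "cball (0::'a) r \<in> sets lebesgue" by (simp add: borel_closed)
  ultimately show ?thesis using a set_integrable_subset by blast
qed

lemma cont_int: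
  fixes f :: "'a::euclidean_space \<Rightarrow> 'b::euclidean_space"
  assumes "continuous_on UNIV f"
  shows "f integrable_on cball 0 r"
  using cont_abs_int[OF assms] absolutely_integrable_on_def by blast

lemma int_inv:
  fixes g :: "real^'n::{finite,wellorder} \<Rightarrow> real^'n::{finite,wellorder}" and f :: "real^'n::{finite,wellorder} \<Rightarrow> real"
  assumes g: "linear g" "\<And>x. norm (g x) = norm x" "\<And>x. g (g x) = x" and f: "continuous_on UNIV f"
  shows "integral (cball 0 1) (\<lambda>x. f (g x)) = integral (cball 0 1) f"
proof -
  define F where "F = (\<lambda>x. f x *\<^sub>R (1 :: real^1))"
  have cF: "continuous_on UNIV F" unfolding F_def by (intro continuous_intros f)
  have cFg: "continuous_on UNIV (F \<circ> g)"
    using cF linear_continuous_on[OF linear_conv_bounded_linear[THEN iffD1, OF g(1)]]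
    by (metis continuous_on_compose continuous_on_subset subset_UNIV)
  have img: "g ` cball 0 1 = cball 0 1"
  proof
    show "g ` cball 0 1 \<subseteq> cball 0 1" using g(2) by auto
    show "cball 0 1 \<subseteq> g ` cball 0 1"
    proof
      fix x :: "real^'n::{finite,wellorder}" assume "x \<in> cball 0 1"
      hence "g x \<in> cball 0 1" using g(2) by simp
      thus "x \<in> g ` cball 0 1" using g(3)[of x] by (metis image_eqI)
    qed
  qed
  have ot: "orthogonal_transformation g" using g(1,2) by (simp add: orthogonal_transformation)
  have det: "\<bar>det (matrix g)\<bar> = 1"
    using det_orthogonal_matrix[of "matrix g"] ot orthogonal_transformation_matrix by force
  have "integral (g ` cball 0 1) F = \<bar>det (matrix g)\<bar> *\<^sub>R integral (cball 0 1) (F \<circ> g)"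
    by (rule integral_change_of_variables_linear[OF g(1)]) (use img cont_abs_int[OF cF] in auto)
  hence eq: "integral (cball 0 1) F = integral (cball 0 1) (F \<circ> g)" using img det by simp
  have "integral (cball 0 1) (\<lambda>x. (F \<circ> g) x $ 1) = integral (cball 0 1) (\<lambda>x. F x $ 1)"
    using integral_component_eq_cart[OF cont_int[OF cFg], of 1] integral_component_eq_cart[OF cont_int[OF cF], of 1] eq
    by simp
  thus ?thesis by (simp add: F_def)
qed

lemma int_pos:
  fixes f :: "'a::euclidean_space \<Rightarrow> real"
  assumes f: "continuous_on UNIV f" "\<And>x. 0 \<le> f x" and v0: "norm v0 < 1" "f v0 > 0"
  shows "integral (cball 0 1) f > 0"
proof -
  have "continuous (at v0) f" using f(1) by (simp add: continuous_on_eq_continuous_at)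
  then obtain d where d: "d > 0" "\<And>x. dist x v0 < d \<Longrightarrow> dist (f x) (f v0) < f v0 / 2"
    using v0(2) unfolding continuous_at_eps_delta by (metis half_gt_zero)
  define e where "e = min (d/2) ((1 - norm v0)/2)"
  have e: "e > 0" using d v0 by (simp add: e_def)
  obtain a b where ab: "v0 \<in> box a b" "box a b \<subseteq> ball v0 e" using rational_boxes[OF e, of v0] by blast
  have ne: "box a b \<noteq> {}" using ab by blast
  have sub: "cbox a b \<subseteq> cball v0 e"
  proof -
    have "closure (box a b) \<subseteq> closure (ball v0 e)" using ab(2) by (rule closure_mono)
    thus ?thesis using ne e by (simp add: closure_box)
  qed
  have sub2: "cbox a b \<subseteq> cball 0 1"
  proof
    fix x assume "x \<in> cbox a b"
    hence "dist v0 x \<le> e" using sub by auto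
    hence "norm x \<le> norm v0 + e" using norm_triangle_ineq2[of x v0] by (simp add: dist_norm norm_minus_commute)
    moreover have "e \<le> (1 - norm v0)/2" unfolding e_def by (rule min.cobounded2)
    ultimately show "x \<in> cball 0 1" using v0 by simp
  qed
  have low: "f v0 / 2 \<le> f x" if "x \<in> cbox a b" for x
  proof -
    have "dist v0 x \<le> e" using sub that by auto
    hence "dist x v0 < d" using d e by (simp add: e_def dist_commute)
    hence "dist (f x) (f v0) < f v0 / 2" by (rule d(2))
    thus ?thesis unfolding dist_real_def by linarith
  qed
  have intf: "f integrable_on cbox a b"
    by (rule integrable_continuous, rule continuous_on_subset[OF f(1)], simp)
  have cpos: "measure lborel (cbox a b) > 0" using ne by (simp add: content_pos_lt_eq box_ne_empty)
  have "0 < measure lborel (cbox a b) * (f v0 / 2)" using cpos v0 by simp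
  also have "\<dots> = integral (cbox a b) (\<lambda>_. f v0 / 2)" by simp
  also have "\<dots> \<le> integral (cbox a b) f"
    by (rule integral_le) (use low intf in auto)
  also have "\<dots> \<le> integral (cball 0 1) f"
    by (rule integral_subset_le[OF sub2]) (use intf cont_int[OF f(1)] f(2) in auto)
  finally show ?thesis .
qed

section \<open>Support functions\<close>

definition supp :: "'a::euclidean_space set \<Rightarrow> 'a \<Rightarrow> real" where
  "supp C u = Sup ((\<lambda>c. u \<bullet> c) ` C)"

lemma supp_bdd: "compact C \<Longrightarrow> bdd_above ((\<lambda>c. u \<bullet> c) ` C)"
  by (intro bounded_imp_bdd_above compact_imp_bounded compact_continuous_image continuous_intros)

lemma supp_ge: "compact C \<Longrightarrow> c \<in> C \<Longrightarrow> u \<bullet> c \<le> supp C u"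
  unfolding supp_def by (rule cSup_upper) (auto intro: supp_bdd)

lemma supp_attain:
  assumes "compact C" "C \<noteq> {}"
  shows "\<exists>c\<in>C. supp C u = u \<bullet> c"
proof -
  have cu: "continuous_on C (\<lambda>c. u \<bullet> c)" by (intro continuous_intros)
  obtain c where c: "c \<in> C" "\<forall>y\<in>C. u \<bullet> y \<le> u \<bullet> c"
    using continuous_attains_sup[OF assms cu] by blast
  have "supp C u = u \<bullet> c" unfolding supp_def
    by (rule cSup_eq_maximum) (use c in auto)
  thus ?thesis using c by blast
qed

lemma supp_le:
  assumes "compact C" "C \<noteq> {}" "\<And>c. c \<in> C \<Longrightarrow> u \<bullet> c \<le> M"
  shows "supp C u \<le> M"
  using supp_attain[OF assms(1,2), of u] assms(3) by auto

lemma supp_lip: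
  fixes C :: "'a::euclidean_space set"
  assumes C: "compact C" "C \<noteq> {}" "C \<subseteq> cball 0 R"
  shows "supp C u \<le> supp C v + R * norm (u - v)"
proof -
  obtain c where c: "c \<in> C" "supp C u = u \<bullet> c" using supp_attain[OF C(1,2)] by blast
  have nc: "norm c \<le> R" using c(1) C(3) by auto
  have "u \<bullet> c = v \<bullet> c + (u - v) \<bullet> c" by (simp add: inner_diff_left)
  also have "(u - v) \<bullet> c \<le> norm (u - v) * norm c" by (rule norm_cauchy_schwarz)
  also have "\<dots> \<le> norm (u - v) * R" using nc by (simp add: mult_left_mono)
  also have "v \<bullet> c \<le> supp C v" by (rule supp_ge[OF C(1) c(1)])
  finally show ?thesis using c(2) by (simp add: mult.commute)
qed

lemma supp_lip_abs:
  fixes C :: "'a::euclidean_space set"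
  assumes C: "compact C" "C \<noteq> {}" "C \<subseteq> cball 0 R"
  shows "\<bar>supp C u - supp C v\<bar> \<le> R * norm (u - v)"
  using supp_lip[OF C, of u v] supp_lip[OF C, of v u] by (simp add: norm_minus_commute abs_le_iff)

lemma supp_zero: "compact C \<Longrightarrow> C \<noteq> {} \<Longrightarrow> supp C 0 = 0"
  using supp_attain[of C 0] by auto

lemma supp_abs_bound:
  fixes C :: "'a::euclidean_space set"
  assumes C: "compact C" "C \<noteq> {}" "C \<subseteq> cball 0 R"
  shows "\<bar>supp C u\<bar> \<le> R * norm u"
  using supp_lip_abs[OF C, of u 0] supp_zero[OF C(1,2)] by simp

lemma supp_cont:
  fixes C :: "'a::euclidean_space set"
  assumes C: "compact C" "C \<noteq> {}" "C \<subseteq> cball 0 R"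
  shows "continuous_on UNIV (supp C)"
proof -
  have R: "R \<ge> 0" using C by auto
  have "(R)-lipschitz_on UNIV (supp C)"
    unfolding lipschitz_on_def using supp_lip_abs[OF C] R by (auto simp: dist_real_def dist_norm)
  thus ?thesis by (rule lipschitz_on_continuous_on)
qed

lemma supp_cont_lin:
  fixes C :: "'a::euclidean_space set" and L :: "'b::euclidean_space \<Rightarrow> 'a"
  assumes C: "compact C" "C \<noteq> {}" "C \<subseteq> cball 0 R" and L: "linear L"
  shows "continuous_on UNIV (\<lambda>v. supp C (L v))"
proof -
  have "continuous_on UNIV L"
    using L by (intro linear_continuous_on linear_conv_bounded_linear[THEN iffD1])
  thus ?thesis by (rule continuous_on_compose2[OF supp_cont[OF C]]) auto
qed

lemma supp_hd:
  fixes A B :: "'a::euclidean_space set"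
  assumes A: "compact A" "A \<noteq> {}" and B: "compact B" "B \<noteq> {}"
  shows "supp A u \<le> supp B u + norm u * hausdorff_dist A B"
proof -
  obtain a where a: "a \<in> A" "supp A u = u \<bullet> a" using supp_attain[OF A] by blast
  obtain b where b: "b \<in> B" "dist a b \<le> hausdorff_dist A B"
    using hd_near[OF compact_imp_bounded[OF A(1)] B a(1)] by blast
  have "u \<bullet> a = u \<bullet> b + u \<bullet> (a - b)" by (simp add: inner_diff_right)
  also have "u \<bullet> (a - b) \<le> norm u * norm (a - b)" by (rule norm_cauchy_schwarz)
  also have "\<dots> \<le> norm u * hausdorff_dist A B" using b(2) by (simp add: dist_norm mult_left_mono)
  also have "u \<bullet> b \<le> supp B u" by (rule supp_ge[OF B(1) b(1)])
  finally show ?thesis using a(2) by simp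
qed

lemma supp_msym:
  fixes C :: "'a::euclidean_space set"
  assumes Q: "subspace Q" and C: "compact C" "C \<noteq> {}"
  shows "supp (minkowski_sym Q C) u = (supp C u + supp C (refl_sub Q u)) / 2"
proof (rule antisym)
  show "supp (minkowski_sym Q C) u \<le> (supp C u + supp C (refl_sub Q u)) / 2"
  proof (rule supp_le[OF msym_compact[OF Q C(1)] msym_nonempty[OF C(2)]])
    fix x assume "x \<in> minkowski_sym Q C"
    then obtain a b where ab: "a \<in> C" "b \<in> C" "x = (1/2::real) *\<^sub>R (a + refl_sub Q b)" by (auto simp: msym_iff)
    have "u \<bullet> x = (u \<bullet> a + refl_sub Q u \<bullet> b) / 2"
      using ab(3) refl_sym[OF Q, of u b] by (simp add: inner_add_right)
    also have "\<dots> \<le> (supp C u + supp C (refl_sub Q u)) / 2"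
      using supp_ge[OF C(1) ab(1), of u] supp_ge[OF C(1) ab(2), of "refl_sub Q u"] by simp
    finally show "u \<bullet> x \<le> (supp C u + supp C (refl_sub Q u)) / 2" .
  qed
next
  obtain a where a: "a \<in> C" "supp C u = u \<bullet> a" using supp_attain[OF C] by blast
  obtain b where b: "b \<in> C" "supp C (refl_sub Q u) = refl_sub Q u \<bullet> b" using supp_attain[OF C] by blast
  let ?x = "(1/2::real) *\<^sub>R (a + refl_sub Q b)"
  have x: "?x \<in> minkowski_sym Q C" using a b by (auto simp: msym_iff)
  have "(supp C u + supp C (refl_sub Q u)) / 2 = u \<bullet> ?x"
    using a(2) b(2) refl_sym[OF Q, of u b] by (simp add: inner_add_right)
  also have "\<dots> \<le> supp (minkowski_sym Q C) u" by (rule supp_ge[OF msym_compact[OF Q C(1)] x])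
  finally show "(supp C u + supp C (refl_sub Q u)) / 2 \<le> supp (minkowski_sym Q C) u" .
qed

section \<open>The energy functional\<close>

definition Phi :: "'a::euclidean_space set \<Rightarrow> real" where
  "Phi C = integral (cball (0::real^('a bidx)) 1) (\<lambda>v. (supp C (bT v))^2)"

definition c0 :: "'a::euclidean_space itself \<Rightarrow> real" where
  "c0 _ = integral (cball (0::real^('a bidx)) 1) (\<lambda>v. 1)"

lemma suppT_cont:
  fixes C :: "'a::euclidean_space set"
  assumes C: "compact C" "C \<noteq> {}" "C \<subseteq> cball 0 R"
  shows "continuous_on UNIV (\<lambda>v::real^('a bidx). supp C (bT v))"
  by (rule supp_cont_lin[OF C bT_linear])

lemma Phi_nonneg:
  fixes C :: "'a::euclidean_space set"
  assumes C: "compact C" "C \<noteq> {}" "C \<subseteq> cball 0 R"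
  shows "0 \<le> Phi C"
  unfolding Phi_def by (rule integral_nonneg) (auto intro!: cont_int continuous_intros suppT_cont[OF C])

lemma Phi_lip:
  fixes A B :: "'a::euclidean_space set"
  assumes A: "compact A" "A \<noteq> {}" "A \<subseteq> cball 0 R" and B: "compact B" "B \<noteq> {}" "B \<subseteq> cball 0 R"
  shows "Phi A \<le> Phi B + (2 * R * c0 TYPE('a)) * hausdorff_dist A B"
proof -
  let ?d = "hausdorff_dist A B"
  have d0: "0 \<le> ?d" using hd_nonneg compact_imp_bounded A B by blast
  have R0: "0 \<le> R" using A by auto
  have pw: "(supp A (bT v))^2 \<le> (supp B (bT v))^2 + 2 * R * ?d" if v: "v \<in> cball 0 1" for v :: "real^('a bidx)"
  proof -
    let ?u = "bT v"
    have nu: "norm ?u \<le> 1" using v by simp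
    define a where "a = supp A ?u"
    define b where "b = supp B ?u"
    have "a \<le> b + norm ?u * ?d" unfolding a_def b_def by (rule supp_hd[OF A(1,2) B(1,2)])
    moreover have "b \<le> a + norm ?u * ?d" unfolding a_def b_def using supp_hd[OF B(1,2) A(1,2), of ?u] hd_sym[of A B] by simp
    ultimately have ab: "\<bar>a - b\<bar> \<le> ?d" using nu d0 mult_left_le_one_le[OF d0 _ nu] by (simp add: abs_le_iff mult.commute)
    have "\<bar>a\<bar> \<le> R * norm ?u" unfolding a_def by (rule supp_abs_bound[OF A])
    hence a1: "\<bar>a\<bar> \<le> R" using nu R0 by (metis mult_left_le order_trans)
    have "\<bar>b\<bar> \<le> R * norm ?u" unfolding b_def by (rule supp_abs_bound[OF B])
    hence b1: "\<bar>b\<bar> \<le> R" using nu R0 by (metis mult_left_le order_trans)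
    have "a^2 - b^2 = (a - b) * (a + b)" by (simp add: power2_eq_square algebra_simps)
    also have "\<dots> \<le> \<bar>a - b\<bar> * \<bar>a + b\<bar>" by (metis abs_ge_self abs_mult)
    also have "\<dots> \<le> ?d * (2 * R)"
      by (rule mult_mono) (use ab a1 b1 d0 in auto)
    finally show ?thesis unfolding a_def b_def by (simp add: algebra_simps)
  qed
  have "Phi A \<le> integral (cball 0 1) (\<lambda>v::real^('a bidx). (supp B (bT v))^2 + 2 * R * ?d)"
    unfolding Phi_def
    by (rule integral_le) (use pw in \<open>auto intro!: cont_int continuous_intros suppT_cont[OF A] suppT_cont[OF B]\<close>)
  also have "\<dots> = Phi B + (2 * R * ?d) * c0 TYPE('a)"
  proof -
    have "integral (cball 0 1) (\<lambda>v::real^('a bidx). (supp B (bT v))^2 + 2 * R * ?d)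
        = integral (cball 0 1) (\<lambda>v::real^('a bidx). (supp B (bT v))^2) + integral (cball 0 1) (\<lambda>v::real^('a bidx). 2 * R * ?d)"
      by (rule integral_add) (auto intro!: cont_int continuous_intros suppT_cont[OF B])
    moreover have "integral (cball 0 1) (\<lambda>v::real^('a bidx). 2 * R * ?d) = (2 * R * ?d) * c0 TYPE('a)"
    proof -
      have "(\<lambda>v::real^('a bidx). 2 * R * ?d) = (\<lambda>v. (2 * R * ?d) *\<^sub>R 1)" by simp
      thus ?thesis unfolding c0_def by (simp only: integral_cmul) simp
    qed
    ultimately show ?thesis unfolding Phi_def by simp
  qed
  finally show ?thesis by (simp add: algebra_simps)
qed

lemma norm_bS[simp]: "norm (bS x) = norm x"
  using norm_bT[of "bS x"] by simp

lemma Phi_msym: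
  fixes C :: "'a::euclidean_space set"
  assumes Q: "subspace Q" and C: "compact C" "C \<noteq> {}" "C \<subseteq> cball 0 R"
  shows "Phi (minkowski_sym Q C) = Phi C - (1/4) * integral (cball (0::real^('a bidx)) 1)
            (\<lambda>v. (supp C (bT v) - supp C (refl_sub Q (bT v)))^2)"
proof -
  define g where "g = (\<lambda>v. bS (refl_sub Q (bT v)))"
  have gl: "linear g" unfolding g_def
    using linear_compose[OF linear_compose[OF bT_linear refl_linear[OF Q]] bS_linear] by (simp add: o_def)
  have gn: "\<And>v. norm (g v) = norm v" unfolding g_def using Q by simp
  have gg: "\<And>v. g (g v) = v" unfolding g_def using Q by simp
  have Tg: "\<And>v. bT (g v) = refl_sub Q (bT v)" unfolding g_def by simp
  define a where "a = (\<lambda>v::real^('a bidx). supp C (bT v))"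
  define b where "b = (\<lambda>v::real^('a bidx). supp C (refl_sub Q (bT v)))"
  have ca: "continuous_on UNIV a" unfolding a_def by (rule suppT_cont[OF C])
  have cb: "continuous_on UNIV b" unfolding b_def
    using supp_cont_lin[OF C linear_compose[OF bT_linear refl_linear[OF Q]]] by (simp add: o_def)
  have bg: "b = (\<lambda>v. a (g v))" unfolding a_def b_def by (simp add: Tg)
  let ?I = "integral (cball (0::real^('a bidx)) 1)"
  have i1: "(\<lambda>v. (1/2) * (a v)^2 + (1/2) * (b v)^2) integrable_on cball 0 1"
    by (intro cont_int continuous_intros ca cb)
  have i2: "(\<lambda>v. (1/4) * (a v - b v)^2) integrable_on cball 0 1"
    by (intro cont_int continuous_intros ca cb)
  have i3: "(\<lambda>v. (1/2) * (a v)^2) integrable_on cball 0 1"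
    by (intro cont_int continuous_intros ca cb)
  have i4: "(\<lambda>v. (1/2) * (b v)^2) integrable_on cball 0 1"
    by (intro cont_int continuous_intros ca cb)
  have i5: "(\<lambda>v. (a v)^2) integrable_on cball 0 1" "(\<lambda>v. (b v)^2) integrable_on cball 0 1"
     "(\<lambda>v. (a v - b v)^2) integrable_on cball 0 1"
    by (intro cont_int continuous_intros ca cb)+
  have "Phi (minkowski_sym Q C) = ?I (\<lambda>v. ((a v + b v) / 2)^2)"
    unfolding Phi_def a_def b_def by (simp add: supp_msym[OF Q C(1,2)])
  also have "(\<lambda>v. ((a v + b v) / 2)^2) = (\<lambda>v. ((1/2) * (a v)^2 + (1/2) * (b v)^2) - (1/4) * (a v - b v)^2)"
    by (rule ext) (simp add: power2_eq_square algebra_simps)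
  also have "?I \<dots> = ?I (\<lambda>v. (1/2) * (a v)^2 + (1/2) * (b v)^2) - ?I (\<lambda>v. (1/4) * (a v - b v)^2)"
    by (rule integral_diff[OF i1 i2])
  also have "?I (\<lambda>v. (1/2) * (a v)^2 + (1/2) * (b v)^2) = ?I (\<lambda>v. (1/2) * (a v)^2) + ?I (\<lambda>v. (1/2) * (b v)^2)"
    by (rule integral_add[OF i3 i4])
  also have "?I (\<lambda>v. (b v)^2) = ?I (\<lambda>v. (a v)^2)"
    unfolding bg by (rule int_inv[OF gl gn gg]) (intro continuous_intros ca)
  hence "?I (\<lambda>v. (1/2) * (b v)^2) = ?I (\<lambda>v. (1/2) * (a v)^2)"
    using integral_mult[OF i5(1), of "1/2"] integral_mult[OF i5(2), of "1/2"] by simp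
  finally have "Phi (minkowski_sym Q C) = 2 * ?I (\<lambda>v. (1/2) * (a v)^2) - ?I (\<lambda>v. (1/4) * (a v - b v)^2)"
    by simp
  also have "2 * ?I (\<lambda>v. (1/2) * (a v)^2) = Phi C"
    unfolding Phi_def a_def using integral_mult[OF i5(1), of "1/2"] by (simp add: a_def)
  also have "?I (\<lambda>v. (1/4) * (a v - b v)^2) = (1/4) * ?I (\<lambda>v. (a v - b v)^2)"
    using integral_mult[OF i5(3), of "1/4"] by simp
  finally show ?thesis by (simp add: a_def b_def)
qed

lemma Phi_mono:
  fixes C :: "'a::euclidean_space set"
  assumes Q: "subspace Q" and C: "compact C" "C \<noteq> {}" "C \<subseteq> cball 0 R"
  shows "Phi (minkowski_sym Q C) \<le> Phi C"
proof -
  have "0 \<le> integral (cball (0::real^('a bidx)) 1) (\<lambda>v. (supp C (bT v) - supp C (refl_sub Q (bT v)))^2)"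
    by (rule integral_nonneg) (auto intro!: cont_int continuous_intros suppT_cont[OF C]
        supp_cont_lin[OF C linear_compose[OF bT_linear refl_linear[OF Q]], unfolded o_def])
  thus ?thesis using Phi_msym[OF Q C] by simp
qed

lemma Phi_strict:
  fixes C :: "'a::euclidean_space set"
  assumes Q: "subspace Q" and C: "compact C" "C \<noteq> {}" "C \<subseteq> cball 0 R" and cv: "convex C"
    and ne: "refl_sub Q ` C \<noteq> C"
  shows "Phi (minkowski_sym Q C) < Phi C"
proof -
  have "\<not> refl_sub Q ` C \<subseteq> C"
  proof
    assume sub: "refl_sub Q ` C \<subseteq> C"
    have "C \<subseteq> refl_sub Q ` C"
    proof
      fix x assume "x \<in> C"
      hence "refl_sub Q x \<in> C" using sub by blast
      moreover have "x = refl_sub Q (refl_sub Q x)" using Q by simp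
      ultimately show "x \<in> refl_sub Q ` C" by blast
    qed
    thus False using sub ne by blast
  qed
  then obtain x where x: "x \<in> C" "refl_sub Q x \<notin> C" by blast
  obtain w \<beta> where w: "w \<bullet> refl_sub Q x < \<beta>" "\<forall>y\<in>C. w \<bullet> y > \<beta>"
    using separating_hyperplane_closed_point[OF cv compact_imp_closed[OF C(1)] x(2)] by blast
  have w0: "w \<noteq> 0" using w x(1) by auto
  define t where "t = 1 / (2 * norm w)"
  have t: "t > 0" using w0 by (simp add: t_def)
  define u where "u = t *\<^sub>R (- w)"
  have nu: "norm u = 1/2" using w0 by (simp add: u_def t_def)
  have "supp C u \<le> - t * \<beta>"
  proof (rule supp_le[OF C(1,2)])
    fix y assume "y \<in> C"
    hence "w \<bullet> y > \<beta>" using w by blast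
    thus "u \<bullet> y \<le> - t * \<beta>" using t by (simp add: u_def)
  qed
  also have "- t * \<beta> < u \<bullet> refl_sub Q x" using w(1) t by (simp add: u_def)
  also have "\<dots> = refl_sub Q u \<bullet> x" using refl_sym[OF Q, of u x] by simp
  also have "\<dots> \<le> supp C (refl_sub Q u)" by (rule supp_ge[OF C(1) x(1)])
  finally have neq: "supp C u \<noteq> supp C (refl_sub Q u)" by simp
  define f where "f = (\<lambda>v::real^('a bidx). (supp C (bT v) - supp C (refl_sub Q (bT v)))^2)"
  have cf: "continuous_on UNIV f" unfolding f_def
    by (intro continuous_intros suppT_cont[OF C]
        supp_cont_lin[OF C linear_compose[OF bT_linear refl_linear[OF Q]], unfolded o_def])
  have "integral (cball 0 1) f > 0"
  proof (rule int_pos[OF cf, of "bS u"])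
    show "\<And>x. 0 \<le> f x" by (simp add: f_def)
    show "norm (bS u) < 1" using nu by simp
    show "f (bS u) > 0" using neq by (simp add: f_def)
  qed
  thus ?thesis using Phi_msym[OF Q C(1,2,3)] by (simp add: f_def)
qed

lemma iter_props:
  fixes C :: "'a::euclidean_space set"
  assumes H: "\<And>k. subspace (H k)" and C: "compact C" "C \<noteq> {}" "C \<subseteq> cball 0 R"
  shows "compact (sym_iter H m C) \<and> sym_iter H m C \<noteq> {} \<and> sym_iter H m C \<subseteq> cball 0 R"
proof (induction m)
  case 0 thus ?case using C by simp
next
  case (Suc m)
  hence c: "compact (sym_iter H m C)" and n: "sym_iter H m C \<noteq> {}" and b: "sym_iter H m C \<subseteq> cball 0 R" by auto
  show ?case using msym_compact[OF H c] msym_nonempty[OF n] msym_cball[OF H b] by simp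
qed

lemma iter_convex:
  fixes C :: "'a::euclidean_space set"
  assumes H: "\<And>k. subspace (H k)" and C: "convex C"
  shows "convex (sym_iter H m C)"
  by (induction m) (simp_all add: C msym_convex[OF H])

lemma iter_mono: "A \<subseteq> B \<Longrightarrow> sym_iter H m A \<subseteq> sym_iter H m B"
  by (induction m) (simp_all add: msym_mono)

section \<open>Variance argument\<close>

definition rep :: "'a::euclidean_space set \<Rightarrow> 'a \<Rightarrow> real \<Rightarrow> bool" where
  "rep A x \<beta> \<longleftrightarrow> (\<exists>S w. finite S \<and> S \<subseteq> A \<and> (\<forall>s\<in>S. 0 \<le> w s) \<and> sum w S = 1 \<and>
      (\<Sum>s\<in>S. w s *\<^sub>R s) = x \<and> (\<Sum>s\<in>S. w s * (norm (s - x))^2) \<le> \<beta>)"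

lemma push_sum:
  fixes f :: "'p \<Rightarrow> 'b" and c :: "'p \<Rightarrow> real" and \<phi> :: "'b \<Rightarrow> 'c::real_vector"
  assumes "finite P"
  shows "(\<Sum>z\<in>f ` P. (\<Sum>p\<in>{p\<in>P. f p = z}. c p) *\<^sub>R \<phi> z) = (\<Sum>p\<in>P. c p *\<^sub>R \<phi> (f p))"
proof -
  have "(\<Sum>p\<in>P. c p *\<^sub>R \<phi> (f p)) = (\<Sum>z\<in>f ` P. \<Sum>p\<in>{p\<in>P. f p = z}. c p *\<^sub>R \<phi> (f p))"
    by (rule sum.image_gen[OF assms])
  also have "\<dots> = (\<Sum>z\<in>f ` P. (\<Sum>p\<in>{p\<in>P. f p = z}. c p) *\<^sub>R \<phi> z)"
  proof (rule sum.cong[OF refl])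
    fix z assume "z \<in> f ` P"
    have "(\<Sum>p\<in>{p\<in>P. f p = z}. c p *\<^sub>R \<phi> (f p)) = (\<Sum>p\<in>{p\<in>P. f p = z}. c p *\<^sub>R \<phi> z)"
      by (rule sum.cong) auto
    thus "(\<Sum>p\<in>{p\<in>P. f p = z}. c p *\<^sub>R \<phi> (f p)) = (\<Sum>p\<in>{p\<in>P. f p = z}. c p) *\<^sub>R \<phi> z"
      by (simp add: scaleR_sum_left)
  qed
  finally show ?thesis by simp
qed

lemma sum_prod_split: "(\<Sum>p\<in>A \<times> B. g (fst p) (snd p)) = (\<Sum>x\<in>A. \<Sum>y\<in>B. g x y)"
  by (simp add: sum.cartesian_product case_prod_beta')

lemma rep_msym:
  fixes A :: "'a::euclidean_space set"
  assumes Q: "subspace Q" and ra: "rep A a \<alpha>" and rb: "rep A b \<beta>"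
  shows "rep (minkowski_sym Q A) ((1/2::real) *\<^sub>R (a + refl_sub Q b)) ((\<alpha> + \<beta>) / 4)"
proof -
  obtain S w where S: "finite S" "S \<subseteq> A" "\<forall>s\<in>S. 0 \<le> w s" "sum w S = 1" "(\<Sum>s\<in>S. w s *\<^sub>R s) = a"
    "(\<Sum>s\<in>S. w s * (norm (s - a))^2) \<le> \<alpha>" using ra unfolding rep_def by blast
  obtain T v where T: "finite T" "T \<subseteq> A" "\<forall>t\<in>T. 0 \<le> v t" "sum v T = 1" "(\<Sum>t\<in>T. v t *\<^sub>R t) = b"
    "(\<Sum>t\<in>T. v t * (norm (t - b))^2) \<le> \<beta>" using rb unfolding rep_def by blast
  have L: "linear (refl_sub Q)" by (rule refl_linear[OF Q])
  define P where "P = S \<times> T"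
  define f where "f = (\<lambda>p. (1/2::real) *\<^sub>R (fst p + refl_sub Q (snd p)))"
  define c where "c = (\<lambda>p. w (fst p) * v (snd p))"
  define W where "W = (\<lambda>z. \<Sum>p\<in>{p\<in>P. f p = z}. c p)"
  define x where "x = (1/2::real) *\<^sub>R (a + refl_sub Q b)"
  have fP: "finite P" using S(1) T(1) by (simp add: P_def)
  have key: "(\<Sum>z\<in>f ` P. W z *\<^sub>R \<phi> z) = (\<Sum>p\<in>P. c p *\<^sub>R \<phi> (f p))" for \<phi> :: "'a \<Rightarrow> 'c::real_vector"
    unfolding W_def by (rule push_sum[OF fP])
  have fin: "finite (f ` P)" using fP by simp
  have sub1: "f (s, t) \<in> minkowski_sym Q A" if "s \<in> S" "t \<in> T" for s t
    unfolding msym_iff f_def using that S(2) T(2) by (simp only: fst_conv snd_conv) blast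
  have sub: "f ` P \<subseteq> minkowski_sym Q A"
    unfolding P_def using sub1 by auto
  have Wnn: "\<forall>z\<in>f ` P. 0 \<le> W z"
    unfolding W_def c_def P_def using S(3) T(3) by (auto intro!: sum_nonneg)
  have sumc: "(\<Sum>p\<in>P. c p * g (fst p) (snd p)) = (\<Sum>s\<in>S. \<Sum>t\<in>T. w s * v t * g s t)" for g
    unfolding P_def c_def by (rule sum_prod_split)
  have sumW: "sum W (f ` P) = 1"
  proof -
    have "sum W (f ` P) = (\<Sum>z\<in>f ` P. W z *\<^sub>R (1::real))" by simp
    also have "\<dots> = (\<Sum>p\<in>P. c p * 1)" using key[of "\<lambda>_. 1::real"] by simp
    also have "\<dots> = (\<Sum>s\<in>S. \<Sum>t\<in>T. w s * v t * 1)" by (rule sumc)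
    also have "\<dots> = (\<Sum>s\<in>S. w s * sum v T)" by (simp add: sum_distrib_left)
    also have "\<dots> = 1" using S(4) T(4) by simp
    finally show ?thesis .
  qed
  have meanS: "(\<Sum>s\<in>S. w s *\<^sub>R (s - a)) = 0"
    using S(4,5) by (simp add: scaleR_diff_right sum_subtractf flip: scaleR_sum_left)
  have meanT: "(\<Sum>t\<in>T. v t *\<^sub>R (t - b)) = 0"
    using T(4,5) by (simp add: scaleR_diff_right sum_subtractf flip: scaleR_sum_left)
  have mean: "(\<Sum>z\<in>f ` P. W z *\<^sub>R z) = x"
  proof -
    have "(\<Sum>z\<in>f ` P. W z *\<^sub>R z) = (\<Sum>p\<in>P. c p *\<^sub>R f p)" using key[of "\<lambda>z. z"] by simp
    also have "\<dots> = (\<Sum>p\<in>P. c p *\<^sub>R ((1/2::real) *\<^sub>R (fst p + refl_sub Q (snd p))))" by (simp add: f_def)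
    also have "\<dots> = (\<Sum>s\<in>S. \<Sum>t\<in>T. (w s * v t) *\<^sub>R ((1/2::real) *\<^sub>R (s + refl_sub Q t)))"
      unfolding P_def c_def by (rule sum_prod_split)
    also have "\<dots> = (1/2::real) *\<^sub>R ((\<Sum>s\<in>S. \<Sum>t\<in>T. (w s * v t) *\<^sub>R s) + (\<Sum>s\<in>S. \<Sum>t\<in>T. (w s * v t) *\<^sub>R refl_sub Q t))"
      by (simp add: scaleR_add_right sum.distrib scaleR_sum_right)
    also have "(\<Sum>s\<in>S. \<Sum>t\<in>T. (w s * v t) *\<^sub>R s) = a"
    proof -
      have "(\<Sum>s\<in>S. \<Sum>t\<in>T. (w s * v t) *\<^sub>R s) = (\<Sum>s\<in>S. (w s * sum v T) *\<^sub>R s)"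
        by (simp add: scaleR_sum_left sum_distrib_left)
      thus ?thesis using S(5) T(4) by simp
    qed
    also have "(\<Sum>s\<in>S. \<Sum>t\<in>T. (w s * v t) *\<^sub>R refl_sub Q t) = refl_sub Q b"
    proof -
      have "(\<Sum>s\<in>S. \<Sum>t\<in>T. (w s * v t) *\<^sub>R refl_sub Q t) = (\<Sum>s\<in>S. w s *\<^sub>R (\<Sum>t\<in>T. v t *\<^sub>R refl_sub Q t))"
        by (simp add: scaleR_sum_right)
      also have "(\<Sum>t\<in>T. v t *\<^sub>R refl_sub Q t) = refl_sub Q b"
      proof -
        have "refl_sub Q b = refl_sub Q (\<Sum>t\<in>T. v t *\<^sub>R t)" using T(5) by simp
        also have "\<dots> = (\<Sum>t\<in>T. refl_sub Q (v t *\<^sub>R t))" by (rule linear_sum[OF L])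
        also have "\<dots> = (\<Sum>t\<in>T. v t *\<^sub>R refl_sub Q t)" by (simp add: linear_scale[OF L])
        finally show ?thesis by simp
      qed
      finally show ?thesis using S(4) by (simp flip: scaleR_sum_left)
    qed
    finally show ?thesis by (simp add: x_def)
  qed
  have var: "(\<Sum>z\<in>f ` P. W z * (norm (z - x))^2) \<le> (\<alpha> + \<beta>) / 4"
  proof -
    have "(\<Sum>z\<in>f ` P. W z * (norm (z - x))^2) = (\<Sum>p\<in>P. c p * (norm (f p - x))^2)"
      using key[of "\<lambda>z. (norm (z - x))^2"] by simp
    also have "\<dots> = (\<Sum>s\<in>S. \<Sum>t\<in>T. w s * v t * (norm ((1/2::real) *\<^sub>R (s + refl_sub Q t) - x))^2)"
      unfolding f_def by (rule sumc)
    also have "\<dots> = (\<Sum>s\<in>S. \<Sum>t\<in>T. w s * v t * ((1/4) * (norm (s - a))^2 + (1/4) * (norm (t - b))^2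
                       + (1/2) * ((s - a) \<bullet> refl_sub Q (t - b))))"
    proof (intro sum.cong refl)
      fix s t
      have e: "(1/2::real) *\<^sub>R (s + refl_sub Q t) - x = (1/2::real) *\<^sub>R ((s - a) + refl_sub Q (t - b))"
        by (simp add: x_def linear_diff[OF L] algebra_simps)
      have "(norm ((1/2::real) *\<^sub>R ((s - a) + refl_sub Q (t - b))))^2
          = (1/4) * ((norm (s - a))^2 + (norm (refl_sub Q (t - b)))^2 + 2 * ((s - a) \<bullet> refl_sub Q (t - b)))"
        by (simp add: power2_norm_eq_inner inner_add_left inner_add_right inner_commute algebra_simps)
      also have "norm (refl_sub Q (t - b)) = norm (t - b)" using Q by simp
      finally have N: "(norm ((1/2::real) *\<^sub>R ((s - a) + refl_sub Q (t - b))))^2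
          = (1/4) * ((norm (s - a))^2 + (norm (t - b))^2 + 2 * ((s - a) \<bullet> refl_sub Q (t - b)))" .
      show "w s * v t * (norm ((1/2::real) *\<^sub>R (s + refl_sub Q t) - x))^2 = w s * v t * ((1/4) * (norm (s - a))^2 + (1/4) * (norm (t - b))^2
                       + (1/2) * ((s - a) \<bullet> refl_sub Q (t - b)))" unfolding e N by (simp add: algebra_simps)
    qed
    also have "\<dots> = (1/4) * (\<Sum>s\<in>S. \<Sum>t\<in>T. w s * v t * (norm (s - a))^2) + (1/4) * (\<Sum>s\<in>S. \<Sum>t\<in>T. w s * v t * (norm (t - b))^2)
        + (1/2) * (\<Sum>s\<in>S. \<Sum>t\<in>T. w s * v t * ((s - a) \<bullet> refl_sub Q (t - b)))"
    proof -
      have "(\<Sum>s\<in>S. \<Sum>t\<in>T. w s * v t * ((1/4) * (norm (s - a))^2 + (1/4) * (norm (t - b))^2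
                       + (1/2) * ((s - a) \<bullet> refl_sub Q (t - b))))
        = (\<Sum>s\<in>S. \<Sum>t\<in>T. (1/4) * (w s * v t * (norm (s - a))^2) + (1/4) * (w s * v t * (norm (t - b))^2)
                       + (1/2) * (w s * v t * ((s - a) \<bullet> refl_sub Q (t - b))))"
        by (intro sum.cong refl) (simp add: algebra_simps)
      thus ?thesis by (simp only: sum.distrib flip: sum_distrib_left)
    qed
    also have "(\<Sum>s\<in>S. \<Sum>t\<in>T. w s * v t * (norm (s - a))^2) = (\<Sum>s\<in>S. w s * (norm (s - a))^2)"
    proof -
      have "(\<Sum>s\<in>S. \<Sum>t\<in>T. w s * v t * (norm (s - a))^2) = (\<Sum>s\<in>S. sum v T * (w s * (norm (s - a))^2))"
        by (intro sum.cong refl) (subst sum_distrib_right, simp add: algebra_simps)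
      thus ?thesis using T(4) by simp
    qed
    also have "(\<Sum>s\<in>S. \<Sum>t\<in>T. w s * v t * (norm (t - b))^2) = (\<Sum>t\<in>T. v t * (norm (t - b))^2)"
    proof -
      have "(\<Sum>s\<in>S. \<Sum>t\<in>T. w s * v t * (norm (t - b))^2) = (\<Sum>s\<in>S. w s * (\<Sum>t\<in>T. v t * (norm (t - b))^2))"
        by (intro sum.cong refl) (subst sum_distrib_left, simp add: algebra_simps)
      thus ?thesis using S(4) by (simp flip: sum_distrib_right)
    qed
    also have "(\<Sum>s\<in>S. \<Sum>t\<in>T. w s * v t * ((s - a) \<bullet> refl_sub Q (t - b))) = 0"
    proof -
      have "(\<Sum>s\<in>S. \<Sum>t\<in>T. w s * v t * ((s - a) \<bullet> refl_sub Q (t - b)))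
          = (\<Sum>s\<in>S. w s *\<^sub>R (s - a)) \<bullet> (\<Sum>t\<in>T. v t *\<^sub>R refl_sub Q (t - b))"
      proof -
        have "(\<Sum>s\<in>S. w s *\<^sub>R (s - a)) \<bullet> (\<Sum>t\<in>T. v t *\<^sub>R refl_sub Q (t - b))
            = (\<Sum>s\<in>S. \<Sum>t\<in>T. (w s *\<^sub>R (s - a)) \<bullet> (v t *\<^sub>R refl_sub Q (t - b)))"
          by (simp only: inner_sum_left inner_sum_right, rule sum.swap)
        also have "\<dots> = (\<Sum>s\<in>S. \<Sum>t\<in>T. w s * v t * ((s - a) \<bullet> refl_sub Q (t - b)))"
          by (intro sum.cong refl) (simp add: algebra_simps)
        finally show ?thesis by simp
      qed
      thus ?thesis using meanS by simp
    qed
    finally show ?thesis using S(6) T(6) by simp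
  qed
  show ?thesis unfolding rep_def
    using fin sub Wnn sumW mean var by (fold x_def) blast
qed

lemma rep_near:
  assumes "rep A x \<beta>"
  shows "\<exists>s\<in>A. (norm (s - x))^2 \<le> \<beta>"
proof -
  obtain S w where S: "finite S" "S \<subseteq> A" "\<forall>s\<in>S. 0 \<le> w s" "sum w S = 1"
    "(\<Sum>s\<in>S. w s * (norm (s - x))^2) \<le> \<beta>" using assms unfolding rep_def by blast
  have ne: "S \<noteq> {}" using S(4) by auto
  define m where "m = Min ((\<lambda>s. (norm (s - x))^2) ` S)"
  have "m \<in> (\<lambda>s. (norm (s - x))^2) ` S" unfolding m_def using S(1) ne by (intro Min_in) auto
  then obtain s0 where s0: "s0 \<in> S" "m = (norm (s0 - x))^2" by blast
  have mle: "m \<le> (norm (s - x))^2" if "s \<in> S" for s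
    unfolding m_def using S(1) that by (intro Min_le) auto
  have "m = (\<Sum>s\<in>S. w s * m)" using S(4) by (simp flip: sum_distrib_right)
  also have "\<dots> \<le> (\<Sum>s\<in>S. w s * (norm (s - x))^2)"
    by (rule sum_mono) (use S(3) mle in \<open>auto intro!: mult_left_mono\<close>)
  finally have "(norm (s0 - x))^2 \<le> \<beta>" using s0 S(5) by linarith
  thus ?thesis using s0(1) S(2) by blast
qed

lemma rep_hull:
  fixes K :: "'a::euclidean_space set"
  assumes K: "K \<subseteq> cball 0 R" and x: "x \<in> convex hull K"
  shows "rep K x (4 * R^2)"
proof -
  obtain S u where S: "finite S" "S \<subseteq> K" "\<forall>s\<in>S. 0 \<le> u s" "sum u S = 1" "(\<Sum>v\<in>S. u v *\<^sub>R v) = x"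
    using x unfolding convex_hull_explicit by blast
  have "convex hull K \<subseteq> cball 0 R" using K by (simp add: hull_minimal)
  hence nx: "norm x \<le> R" using x by auto
  have b: "(norm (s - x))^2 \<le> 4 * R^2" if "s \<in> S" for s
  proof -
    have "norm s \<le> R" using that S(2) K by auto
    hence "norm (s - x) \<le> 2 * R" using nx norm_triangle_ineq4[of s x] by simp
    hence "(norm (s - x))^2 \<le> (2 * R)^2" by (intro power_mono) auto
    thus ?thesis by (simp add: power_mult_distrib)
  qed
  have "(\<Sum>s\<in>S. u s * (norm (s - x))^2) \<le> (\<Sum>s\<in>S. u s * (4 * R^2))"
    by (rule sum_mono) (use S(3) b in \<open>auto intro: mult_left_mono\<close>)
  also have "\<dots> = 4 * R^2" using S(4) by (simp flip: sum_distrib_right)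
  finally show ?thesis unfolding rep_def using S by blast
qed

lemma iter_rep:
  fixes K :: "'a::euclidean_space set"
  assumes H: "\<And>k. subspace (H k)" and K: "K \<subseteq> cball 0 R"
  shows "\<forall>x\<in>sym_iter H m (convex hull K). rep (sym_iter H m K) x (4 * R^2 / 2^m)"
proof (induction m)
  case 0 thus ?case using rep_hull[OF K] by simp
next
  case (Suc m)
  show ?case
  proof
    fix x assume "x \<in> sym_iter H (Suc m) (convex hull K)"
    then obtain a b where ab: "a \<in> sym_iter H m (convex hull K)" "b \<in> sym_iter H m (convex hull K)"
      "x = (1/2::real) *\<^sub>R (a + refl_sub (H m) b)" by (auto simp: msym_iff)
    have "rep (sym_iter H (Suc m) K) x ((4 * R^2 / 2^m + 4 * R^2 / 2^m) / 4)"
      using rep_msym[OF H Suc.IH[rule_format, OF ab(1)] Suc.IH[rule_format, OF ab(2)]] ab(3) by simp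
    thus "rep (sym_iter H (Suc m) K) x (4 * R^2 / 2^Suc m)" by (simp add: field_simps)
  qed
qed

lemma nonconvex_close:
  fixes K :: "'a::euclidean_space set"
  assumes H: "\<And>k. subspace (H k)" and K: "compact K" "K \<noteq> {}" "K \<subseteq> cball 0 R"
  shows "(\<lambda>m. hausdorff_dist (sym_iter H m K) (sym_iter H m (convex hull K))) \<longlonglongrightarrow> 0"
proof -
  have hK: "compact (convex hull K)" "convex hull K \<noteq> {}" "convex hull K \<subseteq> cball 0 R"
    using K by (auto simp: compact_convex_hull hull_minimal)
  let ?d = "\<lambda>m. hausdorff_dist (sym_iter H m K) (sym_iter H m (convex hull K))"
  have bd: "0 \<le> ?d m \<and> ?d m \<le> sqrt (4 * R^2 / 2^m)" for m
  proof -
    have P1: "compact (sym_iter H m K)" "sym_iter H m K \<noteq> {}" using iter_props[of H, OF H K] by auto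
    have P2: "compact (sym_iter H m (convex hull K))" "sym_iter H m (convex hull K) \<noteq> {}"
      using iter_props[of H, OF H hK] by auto
    have sub: "sym_iter H m K \<subseteq> sym_iter H m (convex hull K)" by (rule iter_mono) (rule hull_subset)
    have "?d m \<le> sqrt (4 * R^2 / 2^m)"
    proof (subst hd_le_iff[OF compact_imp_bounded[OF P1(1)] compact_imp_bounded[OF P2(1)] P1(2) P2(2)], intro conjI ballI)
      fix x assume "x \<in> sym_iter H m K"
      hence "setdist {x} (sym_iter H m (convex hull K)) = 0" using sub by (auto intro: setdist_eq_0I)
      thus "setdist {x} (sym_iter H m (convex hull K)) \<le> sqrt (4 * R^2 / 2^m)" by simp
    next
      fix y assume "y \<in> sym_iter H m (convex hull K)"
      then obtain s where s: "s \<in> sym_iter H m K" "(norm (s - y))^2 \<le> 4 * R^2 / 2^m"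
        using rep_near[OF iter_rep[of H, OF H K(3), rule_format, OF \<open>y \<in> sym_iter H m (convex hull K)\<close>]] by blast
      have "setdist {y} (sym_iter H m K) \<le> dist y s" using s(1) by (simp add: setdist_le_dist)
      also have "\<dots> \<le> sqrt (4 * R^2 / 2^m)" using s(2) by (simp add: dist_norm norm_minus_commute real_le_rsqrt)
      finally show "setdist {y} (sym_iter H m K) \<le> sqrt (4 * R^2 / 2^m)" .
    qed
    thus ?thesis using hd_nonneg[OF compact_imp_bounded[OF P1(1)] compact_imp_bounded[OF P2(1)] P1(2) P2(2)] by simp
  qed
  have "(\<lambda>m. 4 * R^2 * (1/2)^m) \<longlonglongrightarrow> 4 * R^2 * 0"
    by (intro tendsto_mult tendsto_const LIMSEQ_realpow_zero) auto
  moreover have "(\<lambda>m. 4 * R^2 * (1/2)^m) = (\<lambda>m. 4 * R^2 / 2^m :: real)"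
    by (rule ext) (simp add: power_one_over)
  ultimately have "(\<lambda>m. 4 * R^2 / 2^m) \<longlonglongrightarrow> 0" by simp
  hence "(\<lambda>m. sqrt (4 * R^2 / 2^m)) \<longlonglongrightarrow> sqrt 0" by (rule tendsto_real_sqrt)
  hence l: "(\<lambda>m. sqrt (4 * R^2 / 2^m)) \<longlonglongrightarrow> 0" by simp
  show ?thesis
    by (rule tendsto_sandwich[OF _ _ tendsto_const l]) (use bd in auto)
qed

lemma hd_limit_convex:
  fixes A :: "nat \<Rightarrow> 'a::euclidean_space set"
  assumes A: "\<And>k. compact (A k)" "\<And>k. A k \<noteq> {}" "\<And>k. convex (A k)" and L: "compact L" "L \<noteq> {}"
    and lim: "(\<lambda>k. hausdorff_dist (A k) L) \<longlonglongrightarrow> 0"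
  shows "convex L"
proof (rule convexI)
  fix x y :: 'a and u v :: real
  assume xy: "x \<in> L" "y \<in> L" and uv: "0 \<le> u" "0 \<le> v" "u + v = 1"
  let ?p = "u *\<^sub>R x + v *\<^sub>R y"
  have bL: "bounded L" using L compact_imp_bounded by auto
  have bnd: "setdist {?p} L \<le> 2 * hausdorff_dist (A k) L" for k
  proof -
    let ?d = "hausdorff_dist (A k) L"
    obtain a where a: "a \<in> A k" "dist x a \<le> ?d" using hd_near2[OF A(1) bL A(2) xy(1)] by blast
    obtain b where b: "b \<in> A k" "dist y b \<le> ?d" using hd_near2[OF A(1) bL A(2) xy(2)] by blast
    let ?q = "u *\<^sub>R a + v *\<^sub>R b"
    have q: "?q \<in> A k" using convexD[OF A(3) a(1) b(1) uv] .
    have "dist ?p ?q = norm (u *\<^sub>R (x - a) + v *\<^sub>R (y - b))" by (simp add: dist_norm algebra_simps)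
    also have "\<dots> \<le> norm (u *\<^sub>R (x - a)) + norm (v *\<^sub>R (y - b))" by (rule norm_triangle_ineq)
    also have "\<dots> = u * dist x a + v * dist y b" using uv by (simp add: dist_norm)
    also have "\<dots> \<le> u * ?d + v * ?d" using a(2) b(2) uv by (intro add_mono mult_left_mono) auto
    also have "\<dots> = ?d" using uv by (simp flip: distrib_right)
    finally have dpq: "dist ?p ?q \<le> ?d" .
    have "setdist {?q} L \<le> ?d" using hd_ge1[OF compact_imp_bounded[OF A(1)] bL L(2) q] .
    moreover have "setdist {?p} L \<le> dist ?p ?q + setdist {?q} L" using setdist_Lipschitz[of ?p L ?q] by simp
    ultimately show ?thesis using dpq by simp
  qed
  have "(\<lambda>k. 2 * hausdorff_dist (A k) L) \<longlonglongrightarrow> 2 * 0" by (intro tendsto_mult tendsto_const lim)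
  hence "setdist {?p} L \<le> 2 * 0" by (rule LIMSEQ_le_const) (use bnd in auto)
  hence "setdist {?p} L = 0" using setdist_pos_le[of "{?p}" L] by simp
  thus "?p \<in> L" using setdist_eq_0_closed[OF compact_imp_closed[OF L(1)]] L(2) by blast
qed

lemma conv_main:
  fixes C0 :: "'a::euclidean_space set" and H :: "nat \<Rightarrow> 'a set" and F :: "'a set set"
  assumes F: "finite F" "\<And>Q. Q \<in> F \<Longrightarrow> subspace Q" "\<And>m. H m \<in> F"
    and C0: "compact C0" "C0 \<noteq> {}" "C0 \<subseteq> cball 0 R" "convex C0"
  shows "\<exists>L. compact L \<and> convex L \<and> L \<noteq> {} \<and> (\<lambda>m. hausdorff_dist (sym_iter H m C0) L) \<longlonglongrightarrow> 0 \<and>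
           (\<forall>Q\<in>F. infinite {m. H m = Q} \<longrightarrow> refl_sub Q ` L = L)"
proof -
  have Hs: "\<And>k. subspace (H k)" using F by blast
  define C where "C = (\<lambda>m. sym_iter H m C0)"
  have Cp: "\<And>m. compact (C m)" "\<And>m. C m \<noteq> {}" "\<And>m. C m \<subseteq> cball 0 R" "\<And>m. convex (C m)"
    using iter_props[of H, OF Hs C0(1,2,3)] iter_convex[of H, OF Hs C0(4)] by (auto simp: C_def)
  have bC: "\<And>m. bounded (C m)" using Cp(1) compact_imp_bounded by auto
  have Csuc: "\<And>m. C (Suc m) = minkowski_sym (H m) (C m)" by (simp add: C_def)
  have R0: "0 \<le> R" using C0(2,3) by auto
  define F' where "F' = {Q\<in>F. infinite {m. H m = Q}}"
  have "finite {m. H m \<notin> F'}"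
  proof -
    have "{m. H m \<notin> F'} = (\<Union>Q\<in>F - F'. {m. H m = Q})" using F(3) by blast
    moreover have "finite (\<Union>Q\<in>F - F'. {m. H m = Q})"
    proof (rule finite_UN_I)
      show "finite (F - F')" using F(1) by simp
      fix Q assume "Q \<in> F - F'"
      thus "finite {m. H m = Q}" unfolding F'_def by blast
    qed
    ultimately show ?thesis by simp
  qed
  then obtain N where "{m. H m \<notin> F'} \<subseteq> {..<N}" using finite_nat_bounded by blast
  hence N: "\<And>m. N \<le> m \<Longrightarrow> H m \<in> F'" by auto
  obtain L r where Lr: "strict_mono r" "compact L" "L \<noteq> {}" "L \<subseteq> cball 0 R"
     "(\<lambda>k. hausdorff_dist (C (r k)) L) \<longlonglongrightarrow> 0"
    using blaschke[of C R, OF Cp(1) Cp(2) Cp(3)] by blast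
  have bL: "bounded L" using Lr(2) compact_imp_bounded by auto
  have Lconv: "convex L"
    by (rule hd_limit_convex[of "\<lambda>k. C (r k)"]) (use Cp Lr in auto)
  have stepL: "hausdorff_dist (C (Suc m)) L \<le> hausdorff_dist (C m) L" if "refl_sub (H m) ` L = L" for m
  proof -
    have "hausdorff_dist (C (Suc m)) L = hausdorff_dist (minkowski_sym (H m) (C m)) (minkowski_sym (H m) L)"
      using msym_fix[OF Hs Lconv that] Csuc by simp
    also have "\<dots> \<le> hausdorff_dist (C m) L" by (rule msym_nonexp[OF Hs Cp(1,2) Lr(2,3)])
    finally show ?thesis .
  qed
  have hdnn: "\<And>m. 0 \<le> hausdorff_dist (C m) L" using hd_nonneg[OF bC bL Cp(2) Lr(3)] .
  have rk: "\<And>k. k \<le> r k" using seq_suble[OF Lr(1)] .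
  have sym: "\<forall>Q\<in>F'. refl_sub Q ` L = L"
  proof (rule ccontr)
    assume "\<not> (\<forall>Q\<in>F'. refl_sub Q ` L = L)"
    then obtain Q0 where Q0: "Q0 \<in> F'" "refl_sub Q0 ` L \<noteq> L" by blast
    define S where "S = {Q\<in>F'. refl_sub Q ` L = L}"
    define D where "D = F' - S"
    have D: "finite D" "Q0 \<in> D" using F(1) Q0 by (auto simp: D_def S_def F'_def)
    have DF: "\<And>Q. Q \<in> D \<Longrightarrow> Q \<in> F \<and> refl_sub Q ` L \<noteq> L" by (auto simp: D_def S_def F'_def)
    define \<delta> where "\<delta> = Min ((\<lambda>Q. Phi L - Phi (minkowski_sym Q L)) ` D)"
    have "\<forall>z\<in>(\<lambda>Q. Phi L - Phi (minkowski_sym Q L)) ` D. 0 < z"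
      using Phi_strict[OF F(2) Lr(2,3,4) Lconv] DF by auto
    hence \<delta>pos: "\<delta> > 0" unfolding \<delta>_def using D by (subst Min_gr_iff) auto
    have \<delta>le: "Phi (minkowski_sym Q L) \<le> Phi L - \<delta>" if "Q \<in> D" for Q
    proof -
      have "\<delta> \<le> Phi L - Phi (minkowski_sym Q L)" unfolding \<delta>_def using D(1) that by (intro Min_le) auto
      thus ?thesis by simp
    qed
    define c where "c = 2 * R * c0 TYPE('a)"
    have c0nn: "0 \<le> c0 TYPE('a)" unfolding c0_def by (rule integral_nonneg[OF cont_int[OF continuous_on_const]]) auto
    have cnn: "0 \<le> c" using R0 c0nn by (simp add: c_def)
    have Pdec: "\<And>m. Phi (C (Suc m)) \<le> Phi (C m)" using Phi_mono[OF Hs Cp(1,2,3)] Csuc by simp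
    have Pmono: "\<And>m n. m \<le> n \<Longrightarrow> Phi (C n) \<le> Phi (C m)"
      by (rule lift_Suc_antimono_le[of "\<lambda>m. Phi (C m)"]) (use Pdec in auto)
    define \<phi> where "\<phi> = Inf (range (\<lambda>m. Phi (C m)))"
    have bddb: "bdd_below (range (\<lambda>m. Phi (C m)))"
      using Phi_nonneg[OF Cp(1,2,3)] by (intro bdd_belowI[of _ 0]) auto
    have \<phi>le: "\<And>m. \<phi> \<le> Phi (C m)" unfolding \<phi>_def by (rule cInf_lower[OF _ bddb]) auto
    have "\<exists>x\<in>range (\<lambda>m. Phi (C m)). x < \<phi> + \<delta>/4"
      by (rule cInf_lessD) (use \<delta>pos in \<open>auto simp: \<phi>_def\<close>)
    then obtain m0 where m0: "Phi (C m0) < \<phi> + \<delta>/4" by blast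
    have "\<delta> / (4 * (c + 1)) > 0" using \<delta>pos cnn by simp
    then obtain K where K: "\<And>k. k \<ge> K \<Longrightarrow> \<bar>hausdorff_dist (C (r k)) L - 0\<bar> < \<delta> / (4 * (c + 1))"
      using Lr(5)[unfolded LIMSEQ_def dist_real_def] by blast
    define k where "k = max K (max N m0)"
    define p where "p = r k"
    have pN: "N \<le> p" "m0 \<le> p" using rk[of k] by (auto simp: p_def k_def)
    have hp: "hausdorff_dist (C p) L < \<delta> / (4 * (c + 1))" using K[of k] by (simp add: p_def k_def)
    have chp: "c * hausdorff_dist (C p) L \<le> \<delta> / 4"
    proof -
      have "c * hausdorff_dist (C p) L \<le> (c + 1) * hausdorff_dist (C p) L" using hdnn[of p] by (simp add: mult_right_mono)
      also have "\<dots> \<le> (c + 1) * (\<delta> / (4 * (c + 1)))" using hp cnn by (intro mult_left_mono) auto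
      also have "\<dots> = \<delta> / 4" using cnn by (simp add: field_simps)
      finally show ?thesis .
    qed
    have "infinite {m. H m = Q0}" using Q0(1) by (simp add: F'_def)
    then obtain n0 where n0: "n0 \<ge> p" "H n0 = Q0" unfolding infinite_nat_iff_unbounded_le by blast
    define n where "n = (LEAST n. p \<le> n \<and> H n \<in> D)"
    have ex: "\<exists>n. p \<le> n \<and> H n \<in> D" using n0 D(2) by blast
    have n: "p \<le> n" "H n \<in> D" using LeastI_ex[OF ex] by (auto simp: n_def)
    have before: "refl_sub (H j) ` L = L" if "p \<le> j" "j < n" for j
    proof -
      have "\<not> (p \<le> j \<and> H j \<in> D)" using not_less_Least[of j "\<lambda>n. p \<le> n \<and> H n \<in> D"] that by (simp add: n_def)
      hence "H j \<notin> D" using that by simp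
      moreover have "H j \<in> F'" using N that pN by simp
      ultimately show ?thesis by (simp add: D_def S_def)
    qed
    have hn: "hausdorff_dist (C n) L \<le> hausdorff_dist (C p) L"
      using n(1)
    proof (induction n rule: dec_induct)
      case base thus ?case by simp
    next
      case (step j)
      have "refl_sub (H j) ` L = L" using before step.hyps by simp
      hence "hausdorff_dist (C (Suc j)) L \<le> hausdorff_dist (C j) L" by (rule stepL)
      thus ?case using step.IH by simp
    qed
    have cs: "compact (minkowski_sym (H n) (C n))" "minkowski_sym (H n) (C n) \<noteq> {}" "minkowski_sym (H n) (C n) \<subseteq> cball 0 R"
      using msym_compact[OF Hs Cp(1)] msym_nonempty[OF Cp(2)] msym_cball[OF Hs Cp(3)] by auto
    have ls: "compact (minkowski_sym (H n) L)" "minkowski_sym (H n) L \<noteq> {}" "minkowski_sym (H n) L \<subseteq> cball 0 R"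
      using msym_compact[OF Hs Lr(2)] msym_nonempty[OF Lr(3)] msym_cball[OF Hs Lr(4)] by auto
    have "Phi (C (Suc n)) = Phi (minkowski_sym (H n) (C n))" by (simp add: Csuc)
    also have "\<dots> \<le> Phi (minkowski_sym (H n) L) + c * hausdorff_dist (minkowski_sym (H n) (C n)) (minkowski_sym (H n) L)"
      using Phi_lip[OF cs ls] by (simp add: c_def)
    also have "\<dots> \<le> Phi (minkowski_sym (H n) L) + c * hausdorff_dist (C n) L"
      using msym_nonexp[OF Hs Cp(1,2) Lr(2,3), of n] cnn by (simp add: mult_left_mono)
    also have "\<dots> \<le> Phi L - \<delta> + c * hausdorff_dist (C p) L"
      using \<delta>le[OF n(2)] hn cnn by (simp add: mult_left_mono add_mono)
    also have "Phi L \<le> Phi (C p) + c * hausdorff_dist (C p) L"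
      using Phi_lip[OF Lr(2,3,4) Cp(1,2,3), of p] hd_sym[of L "C p"] by (simp add: c_def)
    also have "Phi (C p) \<le> Phi (C m0)" using Pmono pN(2) by blast
    finally have "Phi (C (Suc n)) < \<phi>" using m0 chp \<delta>pos by linarith
    thus False using \<phi>le[of "Suc n"] by simp
  qed
  have conv: "(\<lambda>m. hausdorff_dist (C m) L) \<longlonglongrightarrow> 0"
  proof (rule LIMSEQ_I)
    fix \<epsilon> :: real assume e: "\<epsilon> > 0"
    obtain K where K: "\<And>k. k \<ge> K \<Longrightarrow> \<bar>hausdorff_dist (C (r k)) L - 0\<bar> < \<epsilon>"
      using Lr(5)[unfolded LIMSEQ_def dist_real_def] e by blast
    define p where "p = r (max K N)"
    have pN: "N \<le> p" using rk[of "max K N"] by (simp add: p_def)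
    have hp: "hausdorff_dist (C p) L < \<epsilon>" using K[of "max K N"] by (simp add: p_def)
    have "hausdorff_dist (C m) L \<le> hausdorff_dist (C p) L" if "p \<le> m" for m
      using that
    proof (induction m rule: dec_induct)
      case base thus ?case by simp
    next
      case (step j)
      have "H j \<in> F'" using N step.hyps(1) pN by simp
      hence "refl_sub (H j) ` L = L" using sym by blast
      hence "hausdorff_dist (C (Suc j)) L \<le> hausdorff_dist (C j) L" by (rule stepL)
      thus ?case using step.IH by simp
    qed
    thus "\<exists>no. \<forall>m\<ge>no. norm (hausdorff_dist (C m) L - 0) < \<epsilon>"
      using hp hdnn by (intro exI[of _ p]) (auto intro: le_less_trans)
  qed
  show ?thesis
  proof (intro exI[of _ L] conjI Lr(2) Lconv Lr(3) ballI impI)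
    show "(\<lambda>m. hausdorff_dist (sym_iter H m C0) L) \<longlonglongrightarrow> 0" using conv by (simp add: C_def)
  next
    fix Q assume "Q \<in> F" "infinite {m. H m = Q}"
    hence "Q \<in> F'" by (simp add: F'_def)
    thus "refl_sub Q ` L = L" using sym by blast
  qed
qed

theorem corollary10:
  fixes K :: "'a::euclidean_space set"
    and F :: "'a set set"
    and H :: "nat \<Rightarrow> 'a set"
    and i :: nat
  assumes "compact K" and "K \<noteq> {}"
    and "finite F"
    and "\<And>Q. Q \<in> F \<Longrightarrow> subspace Q \<and> dim Q = i"
    and "1 \<le> i" and "i \<le> DIM('a) - 1"
    and "\<And>m. H m \<in> F"
  shows "\<exists>L. compact L \<and> convex L \<and> L \<noteq> {} \<and>
           (\<lambda>m. hausdorff_dist (sym_iter H m K) L) \<longlonglongrightarrow> 0 \<and>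
           (\<lambda>m. hausdorff_dist (sym_iter H m (convex hull K)) L) \<longlonglongrightarrow> 0 \<and>
           (\<forall>Q\<in>F. infinite {m. H m = Q} \<longrightarrow> refl_sub Q ` L = L)"
proof -
  have Fs: "\<And>Q. Q \<in> F \<Longrightarrow> subspace Q" using assms(4) by blast
  have Hs: "\<And>k. subspace (H k)" using Fs assms(7) by blast
  obtain R where R: "K \<subseteq> cball 0 R"
    using compact_imp_bounded[OF assms(1)] unfolding bounded_iff by (auto simp: subset_iff)
  have hK: "compact (convex hull K)" "convex hull K \<noteq> {}" "convex hull K \<subseteq> cball 0 R" "convex (convex hull K)"
  proof -
    show "compact (convex hull K)" by (rule compact_convex_hull[OF assms(1)])
    show "convex hull K \<noteq> {}" using assms(2) by simp
    show "convex hull K \<subseteq> cball 0 R" by (rule hull_minimal[of K "cball 0 R" convex, OF R convex_cball])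
    show "convex (convex hull K)" by (rule convex_convex_hull)
  qed
  obtain L where L: "compact L" "convex L" "L \<noteq> {}"
    "(\<lambda>m. hausdorff_dist (sym_iter H m (convex hull K)) L) \<longlonglongrightarrow> 0"
    "\<forall>Q\<in>F. infinite {m. H m = Q} \<longrightarrow> refl_sub Q ` L = L"
    using conv_main[of F H "convex hull K" R, OF assms(3) Fs assms(7) hK(1,2,3,4)] by blast
  have close: "(\<lambda>m. hausdorff_dist (sym_iter H m K) (sym_iter H m (convex hull K))) \<longlonglongrightarrow> 0"
    by (rule nonconvex_close[OF Hs assms(1,2) R])
  have bnd: "0 \<le> hausdorff_dist (sym_iter H m K) L \<and>
      hausdorff_dist (sym_iter H m K) L \<le> hausdorff_dist (sym_iter H m K) (sym_iter H m (convex hull K))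
        + hausdorff_dist (sym_iter H m (convex hull K)) L" for m
  proof -
    have P1: "compact (sym_iter H m K)" "sym_iter H m K \<noteq> {}"
      using iter_props[of H, OF Hs assms(1,2) R] by auto
    have P2: "compact (sym_iter H m (convex hull K))" "sym_iter H m (convex hull K) \<noteq> {}"
      using iter_props[of H, OF Hs hK(1,2,3)] by auto
    show ?thesis
      using hd_nonneg[OF compact_imp_bounded[OF P1(1)] compact_imp_bounded[OF L(1)] P1(2) L(3)]
        hd_triangle[OF compact_imp_bounded[OF P1(1)] compact_imp_bounded[OF P2(1)] compact_imp_bounded[OF L(1)] P1(2) P2(2) L(3)]
      by simp
  qed
  have "(\<lambda>m. hausdorff_dist (sym_iter H m K) (sym_iter H m (convex hull K))
        + hausdorff_dist (sym_iter H m (convex hull K)) L) \<longlonglongrightarrow> 0 + 0"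
    by (rule tendsto_add[OF close L(4)])
  hence l: "(\<lambda>m. hausdorff_dist (sym_iter H m K) (sym_iter H m (convex hull K))
        + hausdorff_dist (sym_iter H m (convex hull K)) L) \<longlonglongrightarrow> 0" by simp
  have e1: "\<forall>\<^sub>F m in sequentially. 0 \<le> hausdorff_dist (sym_iter H m K) L"
    using bnd by (intro always_eventually allI) blast
  have e2: "\<forall>\<^sub>F m in sequentially. hausdorff_dist (sym_iter H m K) L \<le> hausdorff_dist (sym_iter H m K) (sym_iter H m (convex hull K))
        + hausdorff_dist (sym_iter H m (convex hull K)) L"
    using bnd by (intro always_eventually allI) blast
  have "(\<lambda>m. hausdorff_dist (sym_iter H m K) L) \<longlonglongrightarrow> 0"
    by (rule tendsto_sandwich[OF e1 e2 tendsto_const l])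
  thus ?thesis using L by blast
qed

end
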